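(* Let $X,Y$ be Banach spaces, $Z=X\times Y$, and let $P_X:(x,y)\mapsto x$, $P_Y:(x,y)\mapsto y$. Let $C=\begin{pmatrix}A&0\\0&B\end{pmatrix}$ be the generator of a $C_0$ bi-semigroup on $Z$, i.e. $A$ generates a $C_0$ semigroup $T(t)$ ($t\ge 0$) on $X$ and $-B$ generates a $C_0$ semigroup $t\mapsto S(-t)$ ($t\ge0$) on $Y$. Let $M$ be a Hausdorff topological space with a continuous semiflow $(t,\omega)\mapsto t\omega$. Let $L:M\to L(Z,Z)$ satisfy (D1): $(\omega,z)\mapsto L(\omega)z$ is continuous, $\tau(\omega):=\sup_{t\ge0}|L(t\omega)|<\infty$ for every $\omega$, and $\omega\mapsto\tau(\omega)$ is locally bounded. Let $f:M\times Z\to Z$ satisfy (D2): $f$ is continuous, $\varepsilon(\omega):=\sup_{t\ge0}\mathrm{Lip}\,f(t\omega)(\cdot)<\infty$ for every $\omega$, and $\omega\mapsto\varepsilon(\omega)$ is locally bounded. Assume $(\mathrm{UD}_+)$: there are a decomposition $Z=X_\omega\oplus Y_\omega$ with projections $P_\omega$, $P^c_\omega=I-P_\omega$ and operators $T_1$, $S_1$ satisfying the uniform dichotomy on $\mathbb{R}_+$ (see context) with constant $C_1$ and functions $\mu_s,\mu_u:M\to\mathbb{R}$, and such that for all $\omega\in M$, $t_1\le t_2$, $x_1\in X_{t_1\omega}$, $y_2\in Y_{t_2\omega}$, the function $z(t)=T_1(t-t_1,t_1\omega)x_1+S_1(t-t_2,t_2\omega)y_2$, $t\in[t_1,t_2]$,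 satisfies $P_Xz(t)=T(t-t_1)P_Xz(t_1)+\int_{t_1}^tT(t-s)P_XL(s\omega)z(s)\,ds$ and $P_Yz(t)=S(t-t_2)P_Yz(t_2)-\int_t^{t_2}S(t-s)P_YL(s\omega)z(s)\,ds$ for $t\in[t_1,t_2]$. Let $\{H(t,\omega)\}$ be the cocycle correspondence induced by the integral equation $x(t)=T_1(t-t_1,t_1\omega)x(t_1)+\int_{t_1}^tT_1(t-s,s\omega)P_{s\omega}f(s\omega)z(s)\,ds$, $y(t)=S_1(t-t_2,t_2\omega)y(t_2)-\int_t^{t_2}S_1(t-s,s\omega)P^c_{s\omega}f(s\omega)z(s)\,ds$ (see context). Put $\varepsilon'(\omega)=2C_1\varepsilon(\omega)$ and assume $\mu_u(\omega)-\mu_s(\omega)-2\varepsilon'(\omega)>0$. Take $\alpha,\beta,\lambda_u,\lambda_s$ with $\frac{\varepsilon'(\omega)}{\mu_u(\omega)-\mu_s(\omega)-\varepsilon'(\omega)}\le\alpha(\omega),\beta(\omega)<1$, $\lambda_u(\omega)=e^{-\mu_u(\omega)+\varepsilon'(\omega)}$, $\lambda_s(\omega)=e^{\mu_s(\omega)+\varepsilon'(\omega)}$. Then $H(t,s\omega)$ satisfies the (A)$(\alpha(\omega),\lambda_u^t(\omega))$ (B)$(\beta(\omega),\lambda_s^t(\omega))$ condition for all $t,s\ge0$ and $\omega\in M$. Moreover, if $\alpha(\omega),\beta(\omega)\in(\frac{\varepsilon'(\omega)}{\mu_u(\omega)-\mu_s(\omega)-\varepsilon'(\omega)},1)$ and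 $t\ge\epsilon_1>0$, then $H(t,s\omega)$ satisfies (A)$(\alpha(\omega);k_\alpha(\omega)\alpha(\omega),\lambda_u^t(\omega))$ (B)$(\beta(\omega);k_\beta(\omega)\beta(\omega),\lambda_s^t(\omega))$ for any $k_h(\omega)$ with $\frac{(\sigma(\omega)-\frac{\varepsilon'(\omega)}{h(\omega)})e^{-\sigma(\omega)\epsilon_1}+\frac{\varepsilon'(\omega)}{h(\omega)}}{\sigma(\omega)}\le k_h(\omega)<1$, $h=\alpha,\beta$, where $\sigma(\omega)=\mu_u(\omega)-\mu_s(\omega)-\varepsilon'(\omega)$. In particular, if there is a constant $c>1$ with $\inf_\omega\{\mu_u(\omega)-\mu_s(\omega)-(1+c)\varepsilon'(\omega)\}>0$, then $\alpha,\beta,k_\alpha,k_\beta$ can be taken to be constants less than $1$ and $\sup_\omega\lambda_s(\omega)\lambda_u(\omega)<1$; in fact $\sup_\omega\alpha(\omega),\sup_\omega\beta(\omega)$ can be chosen to tend to $0$ as $\sup_\omega\varepsilon'(\omega)\to0$.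
   Context: Uniform dichotomy on $\mathbb{R}_+$: (a) $Z=X_\omega\oplus Y_\omega$ for each $\omega\in M$, with projections $P_\omega$ onto $X_\omega$ along $Y_\omega$, $P^c_\omega=I-P_\omega$, and $(\omega,z)\mapsto P_\omega z$ continuous; (b) $T_1$ is a strongly continuous linear cocycle: $T_1(t,\omega)\in L(X_\omega,X_{t\omega})$, $T_1(0,\omega)=\mathrm{id}$, $T_1(t+s,\omega)=T_1(t,s\omega)T_1(s,\omega)$, $(t,\omega,z)\mapsto T_1(t,\omega)P_\omega z$ continuous; for $s\le t$, $T_1(t-s,s\omega):X_{s\omega}\to X_{t\omega}$. $S_1$ assigns to $t\ge0,\omega\in M$ an operator $S_1(-t,t\omega)\in L(Y_{t\omega},Y_\omega)$ (the second argument is notation indexed by $(t,\omega)$, since the semiflow need not be invertible; for $t\le s$, $S_1(t-s,s\omega)$ denotes $S_1(-(s-t),(s-t)(t\omega)):Y_{s\omega}\to Y_{t\omega}$), with $S_1(0,\omega)=\mathrm{id}$, $S_1(-(t+s),(t+s)\omega)=S_1(-s,s\omega)S_1(-t,t(s\omega))$, and $(t,\omega,z)\mapsto S_1(-t,t\omega)P^c_{t\omega}z$ continuous; (c) $\sup_\omega|P_\omega|\le C_1$, $\sup_\omega|P^c_\omega|\le C_1$; (d) $|T_1(t,r\omega)|\le e^{\mu_s(\omega)t}$ and $|S_1(-t,t(r\omega))|\le e^{-\mu_u(\omega)t}$ for all $t,r\ge0$, $\omega\in M$. Induced cocycle correspondence: for $s\ge0$, $\omega\in M$, $x_1\in X_\omega$,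 $y_2\in Y_{s\omega}$ the integral equation above (with $t_1=0,t_2=s$) has a unique continuous solution $z(t)=x(t)+y(t)$, $x(t)\in X_{t\omega}$, $y(t)\in Y_{t\omega}$, $t\in[0,s]$, with $x(0)=x_1$, $y(s)=y_2$; set $F_{s,\omega}(x_1,y_2)=x(s)$, $G_{s,\omega}(x_1,y_2)=y(0)$ and define the correspondence $H(s,\omega):X_\omega\oplus Y_\omega\to X_{s\omega}\oplus Y_{s\omega}$ by $(x_2,y_2)\in H(s,\omega)(x_1,y_1)$ iff $y_1=G_{s,\omega}(x_1,y_2)$ and $x_2=F_{s,\omega}(x_1,y_2)$. (A)(B) condition: a correspondence $H$ (a nonempty subset $\mathrm{Graph}H$ of $(X_1\times Y_1)\times(X_2\times Y_2)$, metric spaces with distances written $|u-v|$) satisfies (A)$(\alpha;\alpha',\lambda_u)$ (B)$(\beta;\beta',\lambda_s)$ if for all $(x_1,y_1)\times(x_2,y_2)$, $(x_1',y_1')\times(x_2',y_2')\in\mathrm{Graph}H$: (A1) $|x_1-x_1'|\le\alpha|y_1-y_1'|$ implies $|x_2-x_2'|\le\alpha'|y_2-y_2'|$; (A2) $|x_1-x_1'|\le\alpha|y_1-y_1'|$ implies $|y_1-y_1'|\le\lambda_u|y_2-y_2'|$; (B1) $|y_2-y_2'|\le\beta|x_2-x_2'|$ implies $|y_1-y_1'|\le\beta'|x_1-x_1'|$; (B2) $|y_2-y_2'|\le\beta|x_2-x_2'|$ implies $|x_2-x_2'|\le\lambda_s|x_1-x_1'|$. (A)$(\alpha,\lambda_u)$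 (B)$(\beta,\lambda_s)$ means $\alpha'=\alpha$, $\beta'=\beta$. Here the fibers carry the norm of $Z$. *)

theory Defs
  imports "HOL-Analysis.Analysis"
begin

text \<open>Best Lipschitz constant of a map (meaningful when the map is Lipschitz).\<close>
definition lipc :: "('a::metric_space \<Rightarrow> 'b::metric_space) \<Rightarrow> real" where
  "lipc g = Inf {K. lipschitz_on K UNIV g}"

definition projc :: "('m \<Rightarrow> ('z::real_normed_vector \<Rightarrow>\<^sub>L 'z)) \<Rightarrow> 'm \<Rightarrow> 'z \<Rightarrow> 'z" where
  "projc P \<omega> z = z - P \<omega> z"

definition Xsp :: "('m \<Rightarrow> ('z::real_normed_vector \<Rightarrow>\<^sub>L 'z)) \<Rightarrow> 'm \<Rightarrow> 'z set" where
  "Xsp P \<omega> = range (blinfun_apply (P \<omega>))"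

definition Ysp :: "('m \<Rightarrow> ('z::real_normed_vector \<Rightarrow>\<^sub>L 'z)) \<Rightarrow> 'm \<Rightarrow> 'z set" where
  "Ysp P \<omega> = range (projc P \<omega>)"

text \<open>Notation: \<open>S1 t \<omega>\<close> stands for the paper's \<open>S_1(-t, t\<omega>) : Y_{t\<omega>} \<rightarrow> Y_\<omega>\<close>;
  hence the paper's \<open>S_1(t-s, s\<omega>)\<close> (for \<open>t \<le> s\<close>) is \<open>S1 (s-t) (\<phi> t \<omega>)\<close>.
  \<open>T1 t \<omega>\<close> is \<open>T_1(t,\<omega>)\<close>, \<open>\<phi> t \<omega>\<close> is \<open>t\<omega>\<close>.\<close>

text \<open>Continuous solution on \<open>[0,s]\<close> of the nonlinear integral equation with \<open>t_1=0, t_2=s\<close>,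
  where \<open>x(t) = P_{t\<omega>} z(t)\<close>, \<open>y(t) = P^c_{t\<omega>} z(t)\<close>.\<close>
definition is_sol ::
  "(real \<Rightarrow> 'm \<Rightarrow> 'm) \<Rightarrow> ('m \<Rightarrow> ('z::real_normed_vector \<Rightarrow>\<^sub>L 'z)) \<Rightarrow>
   (real \<Rightarrow> 'm \<Rightarrow> ('z \<Rightarrow>\<^sub>L 'z)) \<Rightarrow> (real \<Rightarrow> 'm \<Rightarrow> ('z \<Rightarrow>\<^sub>L 'z)) \<Rightarrow>
   ('m \<Rightarrow> 'z \<Rightarrow> 'z) \<Rightarrow> real \<Rightarrow> 'm \<Rightarrow> (real \<Rightarrow> 'z) \<Rightarrow> bool" where
  "is_sol \<phi> P T1 S1 f s \<omega> z \<longleftrightarrow>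
     continuous_on {0..s} z \<and>
     (\<forall>t\<in>{0..s}.
        ((\<lambda>r. T1 (t - r) (\<phi> r \<omega>) (P (\<phi> r \<omega>) (f (\<phi> r \<omega>) (z r))))
           has_integral (P (\<phi> t \<omega>) (z t) - T1 t \<omega> (P \<omega> (z 0)))) {0..t} \<and>
        ((\<lambda>r. S1 (r - t) (\<phi> t \<omega>) (projc P (\<phi> r \<omega>) (f (\<phi> r \<omega>) (z r))))
           has_integral (S1 (s - t) (\<phi> t \<omega>) (projc P (\<phi> s \<omega>) (z s)) - projc P (\<phi> t \<omega>) (z t))) {t..s})"

definition corr ::
  "(real \<Rightarrow> 'm \<Rightarrow> 'm) \<Rightarrow> ('m \<Rightarrow> ('z::real_normed_vector \<Rightarrow>\<^sub>L 'z)) \<Rightarrow>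
   (real \<Rightarrow> 'm \<Rightarrow> ('z \<Rightarrow>\<^sub>L 'z)) \<Rightarrow> (real \<Rightarrow> 'm \<Rightarrow> ('z \<Rightarrow>\<^sub>L 'z)) \<Rightarrow>
   ('m \<Rightarrow> 'z \<Rightarrow> 'z) \<Rightarrow> real \<Rightarrow> 'm \<Rightarrow> (('z \<times> 'z) \<times> ('z \<times> 'z)) set" where
  "corr \<phi> P T1 S1 f s \<omega> =
     {((x1, y1), (x2, y2)) | x1 y1 x2 y2. \<exists>z. is_sol \<phi> P T1 S1 f s \<omega> z \<and>
        P \<omega> (z 0) = x1 \<and> projc P \<omega> (z 0) = y1 \<and>
        P (\<phi> s \<omega>) (z s) = x2 \<and> projc P (\<phi> s \<omega>) (z s) = y2}"

definition AB_cond ::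
  "((('a::real_normed_vector) \<times> ('b::real_normed_vector)) \<times> (('c::real_normed_vector) \<times> ('d::real_normed_vector))) set
   \<Rightarrow> real \<Rightarrow> real \<Rightarrow> real \<Rightarrow> real \<Rightarrow> real \<Rightarrow> real \<Rightarrow> bool" where
  "AB_cond G \<alpha> \<alpha>' lamu \<beta> \<beta>' lams \<longleftrightarrow>
     (\<forall>x1 y1 x2 y2 x1' y1' x2' y2'.
        ((x1, y1), (x2, y2)) \<in> G \<longrightarrow> ((x1', y1'), (x2', y2')) \<in> G \<longrightarrow>
        (norm (x1 - x1') \<le> \<alpha> * norm (y1 - y1') \<longrightarrow>
            norm (x2 - x2') \<le> \<alpha>' * norm (y2 - y2') \<and> norm (y1 - y1') \<le> lamu * norm (y2 - y2')) \<and>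
        (norm (y2 - y2') \<le> \<beta> * norm (x2 - x2') \<longrightarrow>
            norm (y1 - y1') \<le> \<beta>' * norm (x1 - x1') \<and> norm (x2 - x2') \<le> lams * norm (x1 - x1')))"

end

theory Submission
  imports Defs
begin


lemma cmp_fwd:
  fixes g g' :: "real \<Rightarrow> real" and t K :: real
  assumes t: "0 \<le> t" and gc: "continuous_on {0..t} g"
    and gd: "\<And>x. 0 < x \<Longrightarrow> x < t \<Longrightarrow> (g has_real_derivative g' x) (at x)"
    and gb: "\<And>x. 0 < x \<Longrightarrow> x < t \<Longrightarrow> g x > 0 \<Longrightarrow> g' x \<le> K * g x"
    and g0: "g 0 \<le> 0"
    and r: "r \<in> {0..t}"
  shows "g r \<le> 0"
proof (rule ccontr)
  assume gr: "\<not> g r \<le> 0"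
  define S where "S = {0..r} \<inter> g -` {..0}"
  have rt: "0 \<le> r" "r \<le> t" using r by auto
  have gcr: "continuous_on {0..r} g" using gc continuous_on_subset rt by fastforce
  have "closed S" unfolding S_def by (rule continuous_closed_preimage[OF gcr]) auto
  moreover have "0 \<in> S" using g0 rt by (auto simp: S_def)
  moreover have "bdd_above S" unfolding S_def by (rule bdd_aboveI[of _ r]) auto
  ultimately have r0S: "Sup S \<in> S" using closed_contains_Sup by blast
  define r0 where "r0 = Sup S"
  have r0: "0 \<le> r0" "r0 \<le> r" "g r0 \<le> 0" using r0S by (auto simp: S_def r0_def)
  have r0r: "r0 < r" using r0 gr by (metis order.order_iff_strict)
  have pos: "g q > 0" if "r0 < q" "q \<le> r" for q
  proof (rule ccontr)
    assume "\<not> g q > 0"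
    then have "q \<in> S" using that r0 by (auto simp: S_def)
    then have "q \<le> r0" unfolding r0_def using \<open>bdd_above S\<close> by (simp add: cSup_upper)
    then show False using that by simp
  qed
  define h where "h = (\<lambda>q. exp (- K * q) * g q)"
  have "h r0 \<ge> h r"
  proof (rule DERIV_nonpos_imp_decreasing_open[of r0 r h])
    show "r0 \<le> r" using r0r by simp
    show "continuous_on {r0..r} h" unfolding h_def
      by (intro continuous_intros continuous_on_subset[OF gcr]) (use r0 in auto)
    fix x assume x: "r0 < x" "x < r"
    have "(h has_real_derivative (exp (- K * x) * (- K) * g x + exp (- K * x) * g' x)) (at x)"
      unfolding h_def using gd[of x] x r0 rt
      by (auto intro!: derivative_eq_intros)
    moreover have "exp (- K * x) * (- K) * g x + exp (- K * x) * g' x \<le> 0"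
    proof -
      have "g' x - K * g x \<le> 0" using gb[of x] pos[of x] x r0 rt by auto
      then have "exp (- K * x) * (g' x - K * g x) \<le> 0" by (simp add: mult_nonneg_nonpos)
      then show ?thesis by (simp add: algebra_simps)
    qed
    ultimately show "\<exists>y. (h has_real_derivative y) (at x) \<and> y \<le> 0" by blast
  qed
  moreover have "h r0 \<le> 0" unfolding h_def using r0 by (simp add: mult_nonneg_nonpos)
  moreover have "h r > 0" unfolding h_def using gr by simp
  ultimately show False by simp
qed

context
  fixes u v :: "real \<Rightarrow> real" and a b \<delta> t :: real
  assumes t: "0 \<le> t" and dl: "0 \<le> \<delta>"
    and uc: "continuous_on {0..t} u" and vc: "continuous_on {0..t} v"
    and un: "\<And>r. r \<in> {0..t} \<Longrightarrow> 0 \<le> u r" and vn: "\<And>r. r \<in> {0..t} \<Longrightarrow> 0 \<le> v r"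
    and I: "\<And>r. r \<in> {0..t} \<Longrightarrow>
       u r \<le> exp (a * r) * u 0 + \<delta> * integral {0..r} (\<lambda>q. exp (a * (r - q)) * (u q + v q))"
    and II: "\<And>r. r \<in> {0..t} \<Longrightarrow>
       v r \<le> exp (- b * (t - r)) * v t + \<delta> * integral {r..t} (\<lambda>q. exp (- b * (q - r)) * (u q + v q))"
    and sig: "0 < b - a - 2 * \<delta>"
begin

definition "W = (\<lambda>q. u q + v q)"
definition "FF = (\<lambda>r. integral {0..r} (\<lambda>q. exp (- a * q) * W q))"
definition "GG = (\<lambda>r. integral {0..r} (\<lambda>q. exp (- b * q) * W q))"
definition "UU = (\<lambda>r. exp (a * r) * (u 0 + \<delta> * FF r))"
definition "VV = (\<lambda>r. exp (b * r) * (exp (- b * t) * v t + \<delta> * (GG t - GG r)))"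

lemma Wc: "continuous_on {0..t} W" unfolding W_def by (intro continuous_intros uc vc)

lemma Wn: "r \<in> {0..t} \<Longrightarrow> 0 \<le> W r" unfolding W_def using un vn by (simp add: add_nonneg_nonneg)

lemma FFd: "r \<in> {0..t} \<Longrightarrow> (FF has_real_derivative exp (- a * r) * W r) (at r within {0..t})"
  unfolding FF_def by (rule integral_has_real_derivative) (auto intro!: continuous_intros Wc)

lemma GGd: "r \<in> {0..t} \<Longrightarrow> (GG has_real_derivative exp (- b * r) * W r) (at r within {0..t})"
  unfolding GG_def by (rule integral_has_real_derivative) (auto intro!: continuous_intros Wc)

lemma FFc: "continuous_on {0..t} FF" by (rule DERIV_continuous_on[OF FFd])
lemma GGc: "continuous_on {0..t} GG" by (rule DERIV_continuous_on[OF GGd])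

lemma UUc: "continuous_on {0..t} UU" unfolding UU_def by (intro continuous_intros FFc)
lemma VVc: "continuous_on {0..t} VV" unfolding VV_def by (intro continuous_intros GGc)

lemma UU0: "UU 0 = u 0" unfolding UU_def FF_def by simp
lemma VVt: "VV t = v t" unfolding VV_def by (simp add: exp_minus field_simps)

lemma Uge: assumes r: "r \<in> {0..t}" shows "u r \<le> UU r"
proof -
  have "integral {0..r} (\<lambda>q. exp (a * (r - q)) * (u q + v q))
      = integral {0..r} (\<lambda>q. exp (a * r) * (exp (- a * q) * W q))"
    by (rule integral_cong) (simp add: W_def right_diff_distrib exp_diff exp_minus field_simps)
  also have "\<dots> = exp (a * r) * FF r" unfolding FF_def by simp
  finally show ?thesis using I[OF r] unfolding UU_def by (simp add: algebra_simps)
qed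

lemma Vge: assumes r: "r \<in> {0..t}" shows "v r \<le> VV r"
proof -
  have int: "(\<lambda>q. exp (- b * q) * W q) integrable_on {0..t}"
    by (intro integrable_continuous_interval continuous_intros Wc)
  have "integral {r..t} (\<lambda>q. exp (- b * (q - r)) * (u q + v q))
      = integral {r..t} (\<lambda>q. exp (b * r) * (exp (- b * q) * W q))"
    by (rule integral_cong) (simp add: W_def right_diff_distrib exp_diff exp_minus field_simps)
  also have "\<dots> = exp (b * r) * integral {r..t} (\<lambda>q. exp (- b * q) * W q)"
    by simp
  also have "integral {r..t} (\<lambda>q. exp (- b * q) * W q) = GG t - GG r"
    using Henstock_Kurzweil_Integration.integral_combine[OF _ _ int, of r] r unfolding GG_def by (simp add: algebra_simps)
  finally have "v r \<le> exp (- b * (t - r)) * v t + \<delta> * (exp (b * r) * (GG t - GG r))"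
    using II[OF r] by simp
  moreover have "exp (- b * (t - r)) = exp (b * r) * exp (- b * t)"
    by (simp add: algebra_simps flip: exp_add)
  ultimately show ?thesis unfolding VV_def by (simp add: algebra_simps)
qed

lemma UUn: "r \<in> {0..t} \<Longrightarrow> 0 \<le> UU r" using Uge un by (meson order_trans)
lemma VVn: "r \<in> {0..t} \<Longrightarrow> 0 \<le> VV r" using Vge vn by (meson order_trans)

lemma UUd: assumes r: "0 < r" "r < t"
  shows "(UU has_real_derivative a * UU r + \<delta> * W r) (at r)"
proof -
  have "(FF has_real_derivative exp (- a * r) * W r) (at r)"
    using FFd[of r] r by (simp add: at_within_Icc_at)
  then have "(UU has_real_derivative (a * exp (a * r) * (u 0 + \<delta> * FF r) + exp (a * r) * (\<delta> * (exp (- a * r) * W r)))) (at r)"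
    unfolding UU_def by (auto intro!: derivative_eq_intros)
  moreover have "exp (a * r) * exp (- a * r) = 1" by (simp add: algebra_simps flip: exp_add)
  ultimately show ?thesis unfolding UU_def
    by (simp add: algebra_simps)
qed

lemma VVd: assumes r: "0 < r" "r < t"
  shows "(VV has_real_derivative b * VV r - \<delta> * W r) (at r)"
proof -
  have "(GG has_real_derivative exp (- b * r) * W r) (at r)"
    using GGd[of r] r by (simp add: at_within_Icc_at)
  then have "(VV has_real_derivative (b * exp (b * r) * (exp (- b * t) * v t + \<delta> * (GG t - GG r)) + exp (b * r) * (\<delta> * (- (exp (- b * r) * W r))))) (at r)"
    unfolding VV_def by (auto intro!: derivative_eq_intros)
  moreover have "exp (b * r) * exp (- b * r) = 1" by (simp add: algebra_simps flip: exp_add)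
  ultimately show ?thesis unfolding VV_def
    by (simp add: algebra_simps)
qed

lemma scalarA:
  assumes al: "2 * \<delta> / (b - a - 2 * \<delta>) \<le> \<alpha>" "\<alpha> \<le> 1" and h: "u 0 \<le> \<alpha> * v 0"
  shows "u t \<le> (exp (- (b - a - 2 * \<delta>) * t) * \<alpha> + 2 * \<delta> / (b - a - 2 * \<delta>) * (1 - exp (- (b - a - 2 * \<delta>) * t))) * v t
       \<and> v 0 \<le> exp ((- b + 2 * \<delta>) * t) * v t"
proof -
  define \<sigma> where "\<sigma> = b - a - 2 * \<delta>"
  define k where "k = 2 * \<delta> / \<sigma>"
  have sp: "0 < \<sigma>" using sig by (simp add: \<sigma>_def)
  have k0: "0 \<le> k" using sp dl by (simp add: k_def)
  have ks: "k * \<sigma> = 2 * \<delta>" using sp by (simp add: k_def)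
  have ka: "k \<le> \<alpha>" using al by (simp add: k_def \<sigma>_def)
  define \<gamma> where "\<gamma> = (\<lambda>r. exp (- \<sigma> * r) * \<alpha> + k * (1 - exp (- \<sigma> * r)))"
  have \<gamma>b: "k \<le> \<gamma> r \<and> \<gamma> r \<le> \<alpha>" if "0 \<le> r" for r
  proof -
    have e1: "exp (- \<sigma> * r) \<le> 1" using sp that by simp
    have "\<gamma> r - k = exp (- \<sigma> * r) * (\<alpha> - k)" by (simp add: \<gamma>_def algebra_simps)
    moreover have "\<alpha> - \<gamma> r = (1 - exp (- \<sigma> * r)) * (\<alpha> - k)" by (simp add: \<gamma>_def algebra_simps)
    moreover have "0 \<le> exp (- \<sigma> * r) * (\<alpha> - k)" using ka by simp
    moreover have "0 \<le> (1 - exp (- \<sigma> * r)) * (\<alpha> - k)" using ka e1 by simp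
    ultimately show ?thesis by linarith
  qed
  have \<gamma>01: "0 \<le> \<gamma> r \<and> \<gamma> r \<le> 1" if "0 \<le> r" for r using \<gamma>b[OF that] k0 al by auto
  have \<gamma>d: "(\<gamma> has_real_derivative (- \<sigma> * \<gamma> r + 2 * \<delta>)) (at r)" for r
  proof -
    have "(\<gamma> has_real_derivative (exp (- \<sigma> * r) * (- \<sigma>) * \<alpha> + k * (- (exp (- \<sigma> * r) * (- \<sigma>))))) (at r)"
      unfolding \<gamma>_def by (auto intro!: derivative_eq_intros)
    moreover have "exp (- \<sigma> * r) * (- \<sigma>) * \<alpha> + k * (- (exp (- \<sigma> * r) * (- \<sigma>))) = - \<sigma> * \<gamma> r + 2 * \<delta>"
      using ks by (simp add: \<gamma>_def algebra_simps)
    ultimately show ?thesis by simp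
  qed
  define g where "g = (\<lambda>r. UU r - \<gamma> r * VV r)"
  define K where "K = \<bar>a\<bar> + 2 * \<delta>"
  have gle: "g r \<le> 0" if r: "r \<in> {0..t}" for r
  proof (rule cmp_fwd[OF t _ _ _ _ r, where K = K and g' = "\<lambda>x. (a * UU x + \<delta> * W x) - (\<gamma> x * (b * VV x - \<delta> * W x) + (- \<sigma> * \<gamma> x + 2 * \<delta>) * VV x)"])
    show "continuous_on {0..t} g" unfolding g_def \<gamma>_def by (intro continuous_intros UUc VVc)
    show "g 0 \<le> 0"
    proof -
      have "\<gamma> 0 = \<alpha>" by (simp add: \<gamma>_def)
      moreover have "\<alpha> * v 0 \<le> \<alpha> * VV 0" using Vge[of 0] t al ka k0 by (intro mult_left_mono) auto
      ultimately show ?thesis using h UU0 by (simp add: g_def)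
    qed
    fix x assume x: "0 < x" "x < t"
    show "(g has_real_derivative (a * UU x + \<delta> * W x) - (\<gamma> x * (b * VV x - \<delta> * W x) + (- \<sigma> * \<gamma> x + 2 * \<delta>) * VV x)) (at x)"
      unfolding g_def by (intro DERIV_diff DERIV_mult' UUd VVd \<gamma>d x)
    assume gx: "0 < g x"
    have xr: "x \<in> {0..t}" using x by auto
    have "W x \<le> UU x + VV x" using Uge[OF xr] Vge[OF xr] by (simp add: W_def)
    then have "(1 + \<gamma> x) * \<delta> * W x \<le> (1 + \<gamma> x) * \<delta> * (UU x + VV x)"
      using \<gamma>01[of x] x dl by (intro mult_left_mono) auto
    then have "(a * UU x + \<delta> * W x) - (\<gamma> x * (b * VV x - \<delta> * W x) + (- \<sigma> * \<gamma> x + 2 * \<delta>) * VV x)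
        \<le> a * UU x + (1 + \<gamma> x) * \<delta> * (UU x + VV x) - \<gamma> x * b * VV x - (- \<sigma> * \<gamma> x + 2 * \<delta>) * VV x"
      by (simp add: algebra_simps)
    also have "\<dots> = (a + (1 + \<gamma> x) * \<delta>) * g x + \<delta> * (\<gamma> x * \<gamma> x - 1) * VV x"
      by (simp add: g_def \<sigma>_def algebra_simps)
    also have "\<dots> \<le> (a + (1 + \<gamma> x) * \<delta>) * g x"
    proof -
      have "\<gamma> x * \<gamma> x \<le> 1" using \<gamma>01[of x] x by (simp add: mult_le_one)
      then have "\<delta> * (\<gamma> x * \<gamma> x - 1) * VV x \<le> 0"
        using dl VVn[OF xr] by (simp add: mult_nonneg_nonpos mult_nonpos_nonneg)
      then show ?thesis by simp
    qed
    also have "\<dots> \<le> K * g x"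
    proof -
      have "(1 + \<gamma> x) * \<delta> \<le> 2 * \<delta>" using \<gamma>01[of x] x dl mult_right_mono[of "1 + \<gamma> x" 2 \<delta>] by simp
      then have "a + (1 + \<gamma> x) * \<delta> \<le> K" unfolding K_def by linarith
      then show ?thesis using gx by (simp add: mult_right_mono)
    qed
    finally show "(a * UU x + \<delta> * W x) - (\<gamma> x * (b * VV x - \<delta> * W x) + (- \<sigma> * \<gamma> x + 2 * \<delta>) * VV x) \<le> K * g x" .
  qed
  have UV: "UU r \<le> VV r" if r: "r \<in> {0..t}" for r
  proof -
    have "UU r \<le> \<gamma> r * VV r" using gle[OF r] by (simp add: g_def)
    also have "\<dots> \<le> VV r" using \<gamma>01[of r] r VVn[OF r] by (simp add: mult_left_le_one_le)
    finally show ?thesis .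
  qed
  have part1: "u t \<le> \<gamma> t * v t"
    using Uge[of t] gle[of t] t by (simp add: g_def VVt)
  define k2 where "k2 = (\<lambda>r. VV 0 - exp (- (b - 2 * \<delta>) * r) * VV r)"
  have k2le: "k2 t \<le> 0"
  proof (rule cmp_fwd[OF t, where K = 0 and g = k2 and r = t and g' = "\<lambda>x. - (exp (- (b - 2 * \<delta>) * x) * (b * VV x - \<delta> * W x) + exp (- (b - 2 * \<delta>) * x) * (- (b - 2 * \<delta>)) * VV x)"])
    show "continuous_on {0..t} k2" unfolding k2_def by (intro continuous_intros VVc)
    show "k2 0 \<le> 0" by (simp add: k2_def)
    show "t \<in> {0..t}" using t by simp
    fix x assume x: "0 < x" "x < t"
    show "(k2 has_real_derivative - (exp (- (b - 2 * \<delta>) * x) * (b * VV x - \<delta> * W x) + exp (- (b - 2 * \<delta>) * x) * (- (b - 2 * \<delta>)) * VV x)) (at x)"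
    proof -
      have e: "((\<lambda>r. exp (- (b - 2 * \<delta>) * r)) has_real_derivative exp (- (b - 2 * \<delta>) * x) * (- (b - 2 * \<delta>))) (at x)"
        by (auto intro!: derivative_eq_intros)
      show ?thesis unfolding k2_def
        using DERIV_diff[OF DERIV_const DERIV_mult'[OF e VVd[OF x]], of "VV 0"] by simp
    qed
    have xr: "x \<in> {0..t}" using x by auto
    have "W x \<le> 2 * VV x" using Uge[OF xr] Vge[OF xr] UV[OF xr] by (simp add: W_def)
    then have "0 \<le> \<delta> * (2 * VV x - W x)" using dl by simp
    then have "0 \<le> exp (- (b - 2 * \<delta>) * x) * (\<delta> * (2 * VV x - W x))" by simp
    then show "- (exp (- (b - 2 * \<delta>) * x) * (b * VV x - \<delta> * W x) + exp (- (b - 2 * \<delta>) * x) * (- (b - 2 * \<delta>)) * VV x) \<le> 0 * k2 x"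
      by (simp add: algebra_simps)
  qed
  have part2: "v 0 \<le> exp ((- b + 2 * \<delta>) * t) * v t"
    using k2le Vge[of 0] t by (simp add: k2_def VVt)
  show ?thesis using part1 part2 by (simp add: \<gamma>_def \<sigma>_def k_def)
qed


lemma scalarB:
  assumes al: "2 * \<delta> / (b - a - 2 * \<delta>) \<le> \<beta>" "\<beta> \<le> 1" and h: "v t \<le> \<beta> * u t"
  shows "v 0 \<le> (exp (- (b - a - 2 * \<delta>) * t) * \<beta> + 2 * \<delta> / (b - a - 2 * \<delta>) * (1 - exp (- (b - a - 2 * \<delta>) * t))) * u 0
       \<and> u t \<le> exp ((a + 2 * \<delta>) * t) * u 0"
proof -
  define \<sigma> where "\<sigma> = b - a - 2 * \<delta>"
  define k where "k = 2 * \<delta> / \<sigma>"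
  have sp: "0 < \<sigma>" using sig by (simp add: \<sigma>_def)
  have k0: "0 \<le> k" using sp dl by (simp add: k_def)
  have ks: "k * \<sigma> = 2 * \<delta>" using sp by (simp add: k_def)
  have ka: "k \<le> \<beta>" using al by (simp add: k_def \<sigma>_def)
  define \<gamma> where "\<gamma> = (\<lambda>r. exp (- \<sigma> * r) * \<beta> + k * (1 - exp (- \<sigma> * r)))"
  have \<gamma>b: "k \<le> \<gamma> r \<and> \<gamma> r \<le> \<beta>" if "0 \<le> r" for r
  proof -
    have e1: "exp (- \<sigma> * r) \<le> 1" using sp that by simp
    have "\<gamma> r - k = exp (- \<sigma> * r) * (\<beta> - k)" by (simp add: \<gamma>_def algebra_simps)
    moreover have "\<beta> - \<gamma> r = (1 - exp (- \<sigma> * r)) * (\<beta> - k)" by (simp add: \<gamma>_def algebra_simps)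
    moreover have "0 \<le> exp (- \<sigma> * r) * (\<beta> - k)" using ka by simp
    moreover have "0 \<le> (1 - exp (- \<sigma> * r)) * (\<beta> - k)" using ka e1 by simp
    ultimately show ?thesis by linarith
  qed
  have \<gamma>01: "0 \<le> \<gamma> r \<and> \<gamma> r \<le> 1" if "0 \<le> r" for r using \<gamma>b[OF that] k0 al by auto
  have \<gamma>d: "(\<gamma> has_real_derivative (- \<sigma> * \<gamma> r + 2 * \<delta>)) (at r)" for r
  proof -
    have "(\<gamma> has_real_derivative (exp (- \<sigma> * r) * (- \<sigma>) * \<beta> + k * (- (exp (- \<sigma> * r) * (- \<sigma>))))) (at r)"
      unfolding \<gamma>_def by (auto intro!: derivative_eq_intros)
    moreover have "exp (- \<sigma> * r) * (- \<sigma>) * \<beta> + k * (- (exp (- \<sigma> * r) * (- \<sigma>))) = - \<sigma> * \<gamma> r + 2 * \<delta>"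
      using ks by (simp add: \<gamma>_def algebra_simps)
    ultimately show ?thesis by simp
  qed
  have refl_c: "continuous_on {0..t} (\<lambda>r. F (t - r))" if "continuous_on {0..t} F" for F
    by (rule continuous_on_compose2[OF that]) (auto intro!: continuous_intros)
  have refl_d: "((\<lambda>r. F (t - r)) has_real_derivative - D) (at x)"
    if "(F has_real_derivative D) (at (t - x))" for F D x
  proof -
    have "((\<lambda>r. t - r) has_real_derivative -1) (at x)" by (auto intro!: derivative_eq_intros)
    from DERIV_chain2[OF that this] show ?thesis by simp
  qed
  define g where "g = (\<lambda>r. VV (t - r) - \<gamma> r * UU (t - r))"
  define K where "K = \<bar>b\<bar> + 2 * \<delta>"
  have gle: "g r \<le> 0" if r: "r \<in> {0..t}" for r
  proof (rule cmp_fwd[OF t _ _ _ _ r, where K = K and g = g and g' = "\<lambda>x. - (b * VV (t - x) - \<delta> * W (t - x)) - (\<gamma> x * (- (a * UU (t - x) + \<delta> * W (t - x))) + (- \<sigma> * \<gamma> x + 2 * \<delta>) * UU (t - x))"])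
    show "continuous_on {0..t} g" unfolding g_def \<gamma>_def by (intro continuous_intros refl_c UUc VVc)
    show "g 0 \<le> 0"
    proof -
      have "\<gamma> 0 = \<beta>" by (simp add: \<gamma>_def)
      moreover have "\<beta> * u t \<le> \<beta> * UU t" using Uge[of t] t al ka k0 by (intro mult_left_mono) auto
      ultimately show ?thesis using h VVt by (simp add: g_def)
    qed
    fix x assume x: "0 < x" "x < t"
    have tx: "0 < t - x" "t - x < t" using x by auto
    show "(g has_real_derivative - (b * VV (t - x) - \<delta> * W (t - x)) - (\<gamma> x * (- (a * UU (t - x) + \<delta> * W (t - x))) + (- \<sigma> * \<gamma> x + 2 * \<delta>) * UU (t - x))) (at x)"
      unfolding g_def by (intro DERIV_diff DERIV_mult' refl_d UUd VVd \<gamma>d tx)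
    assume gx: "0 < g x"
    have xr: "t - x \<in> {0..t}" using x by auto
    have "W (t - x) \<le> UU (t - x) + VV (t - x)" using Uge[OF xr] Vge[OF xr] by (simp add: W_def)
    then have "(1 + \<gamma> x) * \<delta> * W (t - x) \<le> (1 + \<gamma> x) * \<delta> * (UU (t - x) + VV (t - x))"
      using \<gamma>01[of x] x dl by (intro mult_left_mono) auto
    then have "- (b * VV (t - x) - \<delta> * W (t - x)) - (\<gamma> x * (- (a * UU (t - x) + \<delta> * W (t - x))) + (- \<sigma> * \<gamma> x + 2 * \<delta>) * UU (t - x))
        \<le> - b * VV (t - x) + (1 + \<gamma> x) * \<delta> * (UU (t - x) + VV (t - x)) + \<gamma> x * a * UU (t - x) - (- \<sigma> * \<gamma> x + 2 * \<delta>) * UU (t - x)"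
      by (simp add: algebra_simps)
    also have "\<dots> = (- b + (1 + \<gamma> x) * \<delta>) * g x + \<delta> * (\<gamma> x * \<gamma> x - 1) * UU (t - x)"
      by (simp add: g_def \<sigma>_def algebra_simps)
    also have "\<dots> \<le> (- b + (1 + \<gamma> x) * \<delta>) * g x"
    proof -
      have "\<gamma> x * \<gamma> x \<le> 1" using \<gamma>01[of x] x by (simp add: mult_le_one)
      then have "\<delta> * (\<gamma> x * \<gamma> x - 1) * UU (t - x) \<le> 0"
        using dl UUn[OF xr] by (simp add: mult_nonneg_nonpos mult_nonpos_nonneg)
      then show ?thesis by simp
    qed
    also have "\<dots> \<le> K * g x"
    proof -
      have "(1 + \<gamma> x) * \<delta> \<le> 2 * \<delta>" using \<gamma>01[of x] x dl mult_right_mono[of "1 + \<gamma> x" 2 \<delta>] by simp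
      then have "- b + (1 + \<gamma> x) * \<delta> \<le> K" unfolding K_def by linarith
      then show ?thesis using gx by (simp add: mult_right_mono)
    qed
    finally show "- (b * VV (t - x) - \<delta> * W (t - x)) - (\<gamma> x * (- (a * UU (t - x) + \<delta> * W (t - x))) + (- \<sigma> * \<gamma> x + 2 * \<delta>) * UU (t - x)) \<le> K * g x" .
  qed
  have VU: "VV y \<le> UU y" if y: "y \<in> {0..t}" for y
  proof -
    have ty: "t - y \<in> {0..t}" using y by auto
    have "VV y \<le> \<gamma> (t - y) * UU y" using gle[OF ty] by (simp add: g_def)
    also have "\<dots> \<le> UU y" using \<gamma>01[of "t - y"] ty UUn[OF y] by (simp add: mult_left_le_one_le)
    finally show ?thesis .
  qed
  have part1: "v 0 \<le> \<gamma> t * u 0"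
    using Vge[of 0] gle[of t] t by (simp add: g_def UU0)
  define k3 where "k3 = (\<lambda>r. exp (- (a + 2 * \<delta>) * r) * UU r - UU 0)"
  have k3le: "k3 t \<le> 0"
  proof (rule cmp_fwd[OF t, where K = 0 and g = k3 and r = t and g' = "\<lambda>x. exp (- (a + 2 * \<delta>) * x) * (a * UU x + \<delta> * W x) + exp (- (a + 2 * \<delta>) * x) * (- (a + 2 * \<delta>)) * UU x - 0"])
    show "continuous_on {0..t} k3" unfolding k3_def by (intro continuous_intros UUc)
    show "k3 0 \<le> 0" by (simp add: k3_def)
    show "t \<in> {0..t}" using t by simp
    fix x assume x: "0 < x" "x < t"
    show "(k3 has_real_derivative exp (- (a + 2 * \<delta>) * x) * (a * UU x + \<delta> * W x) + exp (- (a + 2 * \<delta>) * x) * (- (a + 2 * \<delta>)) * UU x - 0) (at x)"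
    proof -
      have e: "((\<lambda>r. exp (- (a + 2 * \<delta>) * r)) has_real_derivative exp (- (a + 2 * \<delta>) * x) * (- (a + 2 * \<delta>))) (at x)"
        by (auto intro!: derivative_eq_intros)
      show ?thesis unfolding k3_def
        using DERIV_diff[OF DERIV_mult'[OF e UUd[OF x]] DERIV_const, of "UU 0"] by simp
    qed
    have xr: "x \<in> {0..t}" using x by auto
    have "W x \<le> 2 * UU x" using Uge[OF xr] Vge[OF xr] VU[OF xr] by (simp add: W_def)
    then have "0 \<le> \<delta> * (2 * UU x - W x)" using dl by simp
    then have "0 \<le> exp (- (a + 2 * \<delta>) * x) * (\<delta> * (2 * UU x - W x))" by simp
    then show "exp (- (a + 2 * \<delta>) * x) * (a * UU x + \<delta> * W x) + exp (- (a + 2 * \<delta>) * x) * (- (a + 2 * \<delta>)) * UU x - 0 \<le> 0 * k3 x"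
      by (simp add: algebra_simps)
  qed
  have part2: "u t \<le> exp ((a + 2 * \<delta>) * t) * u 0"
  proof -
    have "exp (- (a + 2 * \<delta>) * t) * UU t \<le> UU 0" using k3le by (simp add: k3_def)
    then have "exp ((a + 2 * \<delta>) * t) * (exp (- (a + 2 * \<delta>) * t) * UU t) \<le> exp ((a + 2 * \<delta>) * t) * UU 0"
      by (intro mult_left_mono) auto
    moreover have "exp ((a + 2 * \<delta>) * t) * (exp (- (a + 2 * \<delta>) * t) * UU t) = UU t"
    proof -
      have "exp ((a + 2 * \<delta>) * t) * exp (- (a + 2 * \<delta>) * t) = 1" by (simp add: algebra_simps flip: exp_add)
      then show ?thesis by (metis mult.assoc mult_1)
    qed
    ultimately have "UU t \<le> exp ((a + 2 * \<delta>) * t) * UU 0" by linarith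
    then show ?thesis using Uge[of t] t UU0 by simp
  qed
  show ?thesis using part1 part2 by (simp add: \<gamma>_def \<sigma>_def k_def)
qed


end

lemma projc_lin: "projc P w x - projc P w y = projc P w (x - y)"
  by (simp add: projc_def blinfun.diff_right)

lemma projc_norm:
  assumes "norm (id_blinfun - P w) \<le> C1"
  shows "norm (projc P w x) \<le> C1 * norm x"
proof -
  have "projc P w x = (id_blinfun - P w) x" by (simp add: projc_def blinfun.diff_left)
  also have "norm \<dots> \<le> norm (id_blinfun - P w) * norm x" by (rule norm_blinfun)
  also have "\<dots> \<le> C1 * norm x" using assms by (simp add: mult_right_mono)
  finally show ?thesis .
qed

lemma P_norm:
  assumes "norm (P w) \<le> C1"
  shows "norm (blinfun_apply (P w) x) \<le> C1 * norm x"
proof -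
  have "norm (P w x) \<le> norm (P w) * norm x" by (rule norm_blinfun)
  also have "\<dots> \<le> C1 * norm x" using assms by (simp add: mult_right_mono)
  finally show ?thesis .
qed

lemma split_norm:
  fixes P :: "'m \<Rightarrow> ('z::real_normed_vector \<Rightarrow>\<^sub>L 'z)"
  shows "norm x \<le> norm (P w x) + norm (projc P w x)"
proof -
  have "x = P w x + projc P w x" by (simp add: projc_def)
  then show ?thesis by (metis norm_triangle_ineq)
qed

lemma est:
  fixes \<phi> :: "real \<Rightarrow> 'm::topological_space \<Rightarrow> 'm" and P :: "'m \<Rightarrow> ('z::banach \<Rightarrow>\<^sub>L 'z)"
    and T1 S1 :: "real \<Rightarrow> 'm \<Rightarrow> ('z \<Rightarrow>\<^sub>L 'z)" and f :: "'m \<Rightarrow> 'z \<Rightarrow> 'z"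
    and C1 E a b s t :: real and \<omega> :: 'm
  assumes phisgH: "\<forall>t s \<omega>. 0 \<le> t \<longrightarrow> 0 \<le> s \<longrightarrow> \<phi> (t + s) \<omega> = \<phi> t (\<phi> s \<omega>)"
    and phi0: "\<And>\<omega>. \<phi> 0 \<omega> = \<omega>"
    and phicont: "continuous_on ({0..} \<times> UNIV) (\<lambda>(t, \<omega>). \<phi> t \<omega>)"
    and Pcont: "continuous_on UNIV (\<lambda>(\<omega>, z). P \<omega> z)"
    and Pbnd: "\<And>\<omega>. norm (P \<omega>) \<le> C1"
    and Pcbnd: "\<And>\<omega>. norm (id_blinfun - P \<omega>) \<le> C1"
    and T1bndH: "\<forall>t r x. 0 \<le> t \<longrightarrow> 0 \<le> r \<longrightarrow> x \<in> Xsp P (\<phi> r \<omega>) \<longrightarrow>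
                  norm (T1 t (\<phi> r \<omega>) x) \<le> exp (a * t) * norm x"
    and S1bndH: "\<forall>t r y. 0 \<le> t \<longrightarrow> 0 \<le> r \<longrightarrow> y \<in> Ysp P (\<phi> t (\<phi> r \<omega>)) \<longrightarrow>
                  norm (S1 t (\<phi> r \<omega>) y) \<le> exp (- b * t) * norm y"
    and lipH: "\<forall>r p q. 0 \<le> r \<longrightarrow> norm (f (\<phi> r \<omega>) p - f (\<phi> r \<omega>) q) \<le> E * norm (p - q)"
    and E0: "0 \<le> E"
    and s: "0 \<le> s" and t: "0 \<le> t"
    and z: "is_sol \<phi> P T1 S1 f t (\<phi> s \<omega>) z" and z': "is_sol \<phi> P T1 S1 f t (\<phi> s \<omega>) z'"
    and u_def: "u = (\<lambda>r. norm (P (\<phi> r (\<phi> s \<omega>)) (z r - z' r)))"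
    and v_def: "v = (\<lambda>r. norm (projc P (\<phi> r (\<phi> s \<omega>)) (z r - z' r)))"
  shows "continuous_on {0..t} u" "continuous_on {0..t} v"
    "\<And>r. r \<in> {0..t} \<Longrightarrow>
       u r \<le> exp (a * r) * u 0 + (C1 * E) * integral {0..r} (\<lambda>q. exp (a * (r - q)) * (u q + v q))"
    "\<And>r. r \<in> {0..t} \<Longrightarrow>
       v r \<le> exp (- b * (t - r)) * v t + (C1 * E) * integral {r..t} (\<lambda>q. exp (- b * (q - r)) * (u q + v q))"
proof -
  have phisg: "\<And>t s \<omega>. 0 \<le> t \<Longrightarrow> 0 \<le> s \<Longrightarrow> \<phi> (t + s) \<omega> = \<phi> t (\<phi> s \<omega>)"
    using phisgH by blast
  have T1bnd: "\<And>t r x. 0 \<le> t \<Longrightarrow> 0 \<le> r \<Longrightarrow> x \<in> Xsp P (\<phi> r \<omega>) \<Longrightarrow>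
                  norm (T1 t (\<phi> r \<omega>) x) \<le> exp (a * t) * norm x" using T1bndH by blast
  have S1bnd: "\<And>t r y. 0 \<le> t \<Longrightarrow> 0 \<le> r \<Longrightarrow> y \<in> Ysp P (\<phi> t (\<phi> r \<omega>)) \<Longrightarrow>
                  norm (S1 t (\<phi> r \<omega>) y) \<le> exp (- b * t) * norm y" using S1bndH by blast
  have lip: "\<And>r p q. 0 \<le> r \<Longrightarrow> norm (f (\<phi> r \<omega>) p - f (\<phi> r \<omega>) q) \<le> E * norm (p - q)"
    using lipH by blast
  define \<omega>0 where "\<omega>0 = \<phi> s \<omega>"
  have C0: "0 \<le> C1" using Pbnd[of \<omega>] norm_ge_zero order_trans by blast
  have phis: "\<phi> q \<omega>0 = \<phi> (q + s) \<omega>" if "0 \<le> q" for q using phisg[OF that s] by (simp add: \<omega>0_def)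
  have phi2: "\<phi> (q - r) (\<phi> (r + s) \<omega>) = \<phi> q \<omega>0" if "0 \<le> r" "r \<le> q" for q r
  proof -
    have "\<phi> (q - r) (\<phi> (r + s) \<omega>) = \<phi> ((q - r) + (r + s)) \<omega>" using phisg[of "q - r" "r + s"] that s by simp
    also have "\<dots> = \<phi> (q + s) \<omega>" by simp
    finally show ?thesis using phis[of q] that by simp
  qed
  have zc: "continuous_on {0..t} z" "continuous_on {0..t} z'" using z z' by (auto simp: is_sol_def)
  have phc: "continuous_on {0..t} (\<lambda>r. \<phi> r \<omega>0)"
  proof -
    have c: "continuous_on {0..t} (\<lambda>r. (r, \<omega>0))" by (intro continuous_intros)
    have i: "(\<lambda>r. (r, \<omega>0)) ` {0..t} \<subseteq> {0..} \<times> UNIV" by auto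
    show ?thesis using continuous_on_compose2[OF phicont c i] by simp
  qed
  have Pc: "continuous_on {0..t} (\<lambda>r. P (\<phi> r \<omega>0) (z r - z' r))"
  proof -
    have c: "continuous_on {0..t} (\<lambda>r. (\<phi> r \<omega>0, z r - z' r))"
      by (intro continuous_on_Pair phc continuous_on_diff zc)
    show ?thesis using continuous_on_compose2[OF Pcont c] by simp
  qed
  show uc: "continuous_on {0..t} u" unfolding u_def \<omega>0_def[symmetric] by (intro continuous_intros Pc)
  show vc: "continuous_on {0..t} v" unfolding v_def \<omega>0_def[symmetric] projc_def
    by (intro continuous_intros Pc zc)
  have dbound: "norm (f (\<phi> q \<omega>0) (z q) - f (\<phi> q \<omega>0) (z' q)) \<le> E * (u q + v q)" if "0 \<le> q" for q
  proof -
    have "norm (f (\<phi> q \<omega>0) (z q) - f (\<phi> q \<omega>0) (z' q)) \<le> E * norm (z q - z' q)"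
      using lip[of "q + s" "z q" "z' q"] that s phis[OF that] by simp
    also have "\<dots> \<le> E * (u q + v q)" unfolding u_def v_def \<omega>0_def[symmetric]
      using E0 split_norm by (intro mult_left_mono) auto
    finally show ?thesis .
  qed
  have Pb2: "norm (P w d) \<le> C1 * K" if "norm d \<le> K" for w d K
    using P_norm[where P=P, OF Pbnd, of w d] mult_left_mono[OF that C0] by linarith
  have Pcb2: "norm (projc P w d) \<le> C1 * K" if "norm d \<le> K" for w d K
    using projc_norm[where P=P, OF Pcbnd, of w d] mult_left_mono[OF that C0] by linarith
  have uvn: "0 \<le> u q + v q" for q unfolding u_def v_def by simp
  show "u r \<le> exp (a * r) * u 0 + (C1 * E) * integral {0..r} (\<lambda>q. exp (a * (r - q)) * (u q + v q))"
    if r: "r \<in> {0..t}" for r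
  proof -
    define F where "F = (\<lambda>z q. T1 (r - q) (\<phi> q \<omega>0) (P (\<phi> q \<omega>0) (f (\<phi> q \<omega>0) (z q))))"
    have hz: "(F z has_integral (P (\<phi> r \<omega>0) (z r) - T1 r \<omega>0 (P \<omega>0 (z 0)))) {0..r}"
      using z r unfolding is_sol_def F_def \<omega>0_def by auto
    have hz': "(F z' has_integral (P (\<phi> r \<omega>0) (z' r) - T1 r \<omega>0 (P \<omega>0 (z' 0)))) {0..r}"
      using z' r unfolding is_sol_def F_def \<omega>0_def by auto
    define \<Delta> where "\<Delta> = P (\<phi> r \<omega>0) (z r - z' r) - T1 r \<omega>0 (P \<omega>0 (z 0 - z' 0))"
    have hd: "((\<lambda>q. F z q - F z' q) has_integral \<Delta>) {0..r}"
      using has_integral_diff[OF hz hz'] unfolding \<Delta>_def by (simp add: blinfun.diff_right algebra_simps)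
    have bnd: "norm (F z q - F z' q) \<le> C1 * E * (exp (a * (r - q)) * (u q + v q))" if q: "q \<in> {0..r}" for q
    proof -
      have q0: "0 \<le> q" "q \<le> r" using q by auto
      have "F z q - F z' q = T1 (r - q) (\<phi> (q + s) \<omega>) (P (\<phi> (q + s) \<omega>) (f (\<phi> q \<omega>0) (z q) - f (\<phi> q \<omega>0) (z' q)))"
        unfolding F_def using phis[OF q0(1)] by (simp add: blinfun.diff_right)
      also have "norm \<dots> \<le> exp (a * (r - q)) * norm (P (\<phi> (q + s) \<omega>) (f (\<phi> q \<omega>0) (z q) - f (\<phi> q \<omega>0) (z' q)))"
        using q0 s by (intro T1bnd) (auto simp: Xsp_def)
      also have "\<dots> \<le> exp (a * (r - q)) * (C1 * (E * (u q + v q)))"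
        by (intro mult_left_mono Pb2 dbound q0) auto
      finally show ?thesis by (simp add: algebra_simps)
    qed
    have int1: "(\<lambda>q. F z q - F z' q) integrable_on {0..r}" using hd by blast
    have ucr: "continuous_on {0..r} u" by (rule continuous_on_subset[OF uc]) (use r in auto)
    have vcr: "continuous_on {0..r} v" by (rule continuous_on_subset[OF vc]) (use r in auto)
    have int2: "(\<lambda>q. C1 * E * (exp (a * (r - q)) * (u q + v q))) integrable_on {0..r}"
      by (intro integrable_continuous_interval continuous_intros ucr vcr)
    have "norm \<Delta> \<le> integral {0..r} (\<lambda>q. C1 * E * (exp (a * (r - q)) * (u q + v q)))"
      using integral_norm_bound_integral[OF int1 int2 bnd] integral_unique[OF hd] by simp
    also have "\<dots> = C1 * E * integral {0..r} (\<lambda>q. exp (a * (r - q)) * (u q + v q))" by simp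
    finally have n\<Delta>: "norm \<Delta> \<le> \<dots>" .
    have "norm (T1 r \<omega>0 (P \<omega>0 (z 0 - z' 0))) \<le> exp (a * r) * norm (P \<omega>0 (z 0 - z' 0))"
      using T1bnd[of r s] r s by (auto simp: Xsp_def \<omega>0_def)
    also have "norm (P \<omega>0 (z 0 - z' 0)) = u 0" unfolding u_def \<omega>0_def[symmetric] phi0 ..
    finally have nT: "norm (T1 r \<omega>0 (P \<omega>0 (z 0 - z' 0))) \<le> exp (a * r) * u 0" .
    have "u r = norm (T1 r \<omega>0 (P \<omega>0 (z 0 - z' 0)) + \<Delta>)" unfolding u_def \<Delta>_def \<omega>0_def by simp
    also have "\<dots> \<le> norm (T1 r \<omega>0 (P \<omega>0 (z 0 - z' 0))) + norm \<Delta>" by (rule norm_triangle_ineq)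
    finally show ?thesis using nT n\<Delta> by simp
  qed
  show "v r \<le> exp (- b * (t - r)) * v t + (C1 * E) * integral {r..t} (\<lambda>q. exp (- b * (q - r)) * (u q + v q))"
    if r: "r \<in> {0..t}" for r
  proof -
    define G where "G = (\<lambda>z q. S1 (q - r) (\<phi> r \<omega>0) (projc P (\<phi> q \<omega>0) (f (\<phi> q \<omega>0) (z q))))"
    have hz: "(G z has_integral (S1 (t - r) (\<phi> r \<omega>0) (projc P (\<phi> t \<omega>0) (z t)) - projc P (\<phi> r \<omega>0) (z r))) {r..t}"
      using z r unfolding is_sol_def G_def \<omega>0_def by auto
    have hz': "(G z' has_integral (S1 (t - r) (\<phi> r \<omega>0) (projc P (\<phi> t \<omega>0) (z' t)) - projc P (\<phi> r \<omega>0) (z' r))) {r..t}"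
      using z' r unfolding is_sol_def G_def \<omega>0_def by auto
    define \<Delta> where "\<Delta> = S1 (t - r) (\<phi> r \<omega>0) (projc P (\<phi> t \<omega>0) (z t - z' t)) - projc P (\<phi> r \<omega>0) (z r - z' r)"
    have hd: "((\<lambda>q. G z q - G z' q) has_integral \<Delta>) {r..t}"
      using has_integral_diff[OF hz hz'] unfolding \<Delta>_def
      by (simp add: blinfun.diff_right algebra_simps flip: projc_lin)
    have bnd: "norm (G z q - G z' q) \<le> C1 * E * (exp (- b * (q - r)) * (u q + v q))" if q: "q \<in> {r..t}" for q
    proof -
      have q0: "0 \<le> r" "r \<le> q" using q r by auto
      have "G z q - G z' q = S1 (q - r) (\<phi> (r + s) \<omega>) (projc P (\<phi> q \<omega>0) (f (\<phi> q \<omega>0) (z q) - f (\<phi> q \<omega>0) (z' q)))"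
        unfolding G_def using phis[OF q0(1)] by (simp add: blinfun.diff_right flip: projc_lin)
      also have "norm \<dots> \<le> exp (- b * (q - r)) * norm (projc P (\<phi> q \<omega>0) (f (\<phi> q \<omega>0) (z q) - f (\<phi> q \<omega>0) (z' q)))"
        using q0 s phi2[OF q0] by (intro S1bnd) (auto simp: Ysp_def)
      also have "\<dots> \<le> exp (- b * (q - r)) * (C1 * (E * (u q + v q)))"
        using q0 by (intro mult_left_mono Pcb2 dbound) auto
      finally show ?thesis by (simp add: algebra_simps)
    qed
    have int1: "(\<lambda>q. G z q - G z' q) integrable_on {r..t}" using hd by blast
    have ucr: "continuous_on {r..t} u" by (rule continuous_on_subset[OF uc]) (use r in auto)
    have vcr: "continuous_on {r..t} v" by (rule continuous_on_subset[OF vc]) (use r in auto)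
    have int2: "(\<lambda>q. C1 * E * (exp (- b * (q - r)) * (u q + v q))) integrable_on {r..t}"
      by (intro integrable_continuous_interval continuous_intros ucr vcr)
    have "norm \<Delta> \<le> integral {r..t} (\<lambda>q. C1 * E * (exp (- b * (q - r)) * (u q + v q)))"
      using integral_norm_bound_integral[OF int1 int2 bnd] integral_unique[OF hd] by simp
    also have "\<dots> = C1 * E * integral {r..t} (\<lambda>q. exp (- b * (q - r)) * (u q + v q))" by simp
    finally have n\<Delta>: "norm \<Delta> \<le> \<dots>" .
    have r0: "0 \<le> r" "r \<le> t" using r by auto
    have "norm (S1 (t - r) (\<phi> r \<omega>0) (projc P (\<phi> t \<omega>0) (z t - z' t))) \<le> exp (- b * (t - r)) * norm (projc P (\<phi> t \<omega>0) (z t - z' t))"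
      using S1bnd[of "t - r" "r + s" "projc P (\<phi> t \<omega>0) (z t - z' t)"] r0 s phi2[OF r0] phis[OF r0(1)]
      by (auto simp: Ysp_def)
    also have "norm (projc P (\<phi> t \<omega>0) (z t - z' t)) = v t" unfolding v_def \<omega>0_def ..
    finally have nS: "norm (S1 (t - r) (\<phi> r \<omega>0) (projc P (\<phi> t \<omega>0) (z t - z' t))) \<le> exp (- b * (t - r)) * v t" .
    have "v r = norm (S1 (t - r) (\<phi> r \<omega>0) (projc P (\<phi> t \<omega>0) (z t - z' t)) - \<Delta>)" unfolding v_def \<Delta>_def \<omega>0_def by simp
    also have "\<dots> \<le> norm (S1 (t - r) (\<phi> r \<omega>0) (projc P (\<phi> t \<omega>0) (z t - z' t))) + norm \<Delta>" by (rule norm_triangle_ineq4)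
    finally show ?thesis using nS n\<Delta> by simp
  qed
qed





lemma lipc_props:
  fixes g :: "'a::metric_space \<Rightarrow> 'b::metric_space"
  assumes L: "lipschitz_on K UNIV g"
  shows "0 \<le> lipc g" "lipc g \<le> K" "dist (g p) (g q) \<le> lipc g * dist p q"
proof -
  define S where "S = {K. lipschitz_on K UNIV g}"
  have ne: "S \<noteq> {}" using L by (auto simp: S_def)
  have bb: "bdd_below S" unfolding S_def by (rule bdd_belowI[of _ 0]) (auto intro: lipschitz_on_nonneg)
  show "0 \<le> lipc g" unfolding lipc_def S_def[symmetric]
    by (rule cInf_greatest[OF ne]) (auto simp: S_def intro: lipschitz_on_nonneg)
  show "lipc g \<le> K" unfolding lipc_def S_def[symmetric] using L bb by (intro cInf_lower) (auto simp: S_def)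
  show "dist (g p) (g q) \<le> lipc g * dist p q"
  proof (cases "p = q")
    case True then show ?thesis by simp
  next
    case False
    then have d: "0 < dist p q" by simp
    have "dist (g p) (g q) / dist p q \<le> lipc g" unfolding lipc_def S_def[symmetric]
    proof (rule cInf_greatest[OF ne])
      fix K' assume "K' \<in> S"
      then have "dist (g p) (g q) \<le> K' * dist p q" by (auto simp: S_def intro: lipschitz_onD)
      then show "dist (g p) (g q) / dist p q \<le> K'" using d by (simp add: divide_le_eq)
    qed
    then show ?thesis using d by (simp add: divide_le_eq)
  qed
qed


theorem theorem3p12:
  fixes T :: "real \<Rightarrow> ('x::banach \<Rightarrow>\<^sub>L 'x)"
    and S :: "real \<Rightarrow> ('y::banach \<Rightarrow>\<^sub>L 'y)"
    and \<phi> :: "real \<Rightarrow> 'm::t2_space \<Rightarrow> 'm"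
    and L :: "'m \<Rightarrow> (('x \<times> 'y) \<Rightarrow>\<^sub>L ('x \<times> 'y))"
    and f :: "'m \<Rightarrow> ('x \<times> 'y) \<Rightarrow> ('x \<times> 'y)"
    and P :: "'m \<Rightarrow> (('x \<times> 'y) \<Rightarrow>\<^sub>L ('x \<times> 'y))"
    and T1 S1 :: "real \<Rightarrow> 'm \<Rightarrow> (('x \<times> 'y) \<Rightarrow>\<^sub>L ('x \<times> 'y))"
    and C1 :: real
    and \<mu>s \<mu>u :: "'m \<Rightarrow> real"
  defines "eps' \<equiv> (\<lambda>\<omega>. 2 * C1 * (SUP t\<in>{0..}. lipc (f (\<phi> t \<omega>))))"
    and "\<sigma> \<equiv> (\<lambda>\<omega>. \<mu>u \<omega> - \<mu>s \<omega> - 2 * C1 * (SUP t\<in>{0..}. lipc (f (\<phi> t \<omega>))))"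
    and "lamu \<equiv> (\<lambda>\<omega>. exp (- \<mu>u \<omega> + 2 * C1 * (SUP t\<in>{0..}. lipc (f (\<phi> t \<omega>)))))"
    and "lams \<equiv> (\<lambda>\<omega>. exp (\<mu>s \<omega> + 2 * C1 * (SUP t\<in>{0..}. lipc (f (\<phi> t \<omega>)))))"
    and "H \<equiv> corr \<phi> P T1 S1 f"
  assumes
    \<comment> \<open>C_0 semigroup T(t), t \<ge> 0, on X\<close>
    T0: "T 0 = id_blinfun"
    and Tsg: "\<And>t s. 0 \<le> t \<Longrightarrow> 0 \<le> s \<Longrightarrow> T (t + s) = T t o\<^sub>L T s"
    and Tcont: "\<And>x. continuous_on {0..} (\<lambda>t. T t x)"
    \<comment> \<open>C_0 semigroup t \<mapsto> S(-t), t \<ge> 0, on Y\<close>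
    and S0: "S 0 = id_blinfun"
    and Ssg: "\<And>t s. 0 \<le> t \<Longrightarrow> 0 \<le> s \<Longrightarrow> S (- (t + s)) = S (- t) o\<^sub>L S (- s)"
    and Scont: "\<And>y. continuous_on {0..} (\<lambda>t. S (- t) y)"
    \<comment> \<open>continuous semiflow on the Hausdorff space M\<close>
    and phi0: "\<And>\<omega>. \<phi> 0 \<omega> = \<omega>"
    and phisg: "\<And>t s \<omega>. 0 \<le> t \<Longrightarrow> 0 \<le> s \<Longrightarrow> \<phi> (t + s) \<omega> = \<phi> t (\<phi> s \<omega>)"
    and phicont: "continuous_on ({0..} \<times> UNIV) (\<lambda>(t, \<omega>). \<phi> t \<omega>)"
    \<comment> \<open>(D1)\<close>
    and D1cont: "continuous_on UNIV (\<lambda>(\<omega>, z). L \<omega> z)"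
    and D1bdd: "\<And>\<omega>. bdd_above ((\<lambda>t. norm (L (\<phi> t \<omega>))) ` {0..})"
    and D1loc: "\<And>\<omega>. \<exists>U. open U \<and> \<omega> \<in> U \<and>
                    (\<exists>K. \<forall>w\<in>U. (SUP t\<in>{0..}. norm (L (\<phi> t w))) \<le> K)"
    \<comment> \<open>(D2)\<close>
    and D2cont: "continuous_on UNIV (\<lambda>(\<omega>, z). f \<omega> z)"
    and D2lip: "\<And>\<omega>. \<exists>K. \<forall>t\<ge>0. lipschitz_on K UNIV (f (\<phi> t \<omega>))"
    and D2loc: "\<And>\<omega>. \<exists>U. open U \<and> \<omega> \<in> U \<and>
                    (\<exists>K. \<forall>w\<in>U. (SUP t\<in>{0..}. lipc (f (\<phi> t w))) \<le> K)"
    \<comment> \<open>(UD+): (a) projections\<close>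
    and Pproj: "\<And>\<omega>. P \<omega> o\<^sub>L P \<omega> = P \<omega>"
    and Pcont: "continuous_on UNIV (\<lambda>(\<omega>, z). P \<omega> z)"
    \<comment> \<open>(b) the cocycle T1\<close>
    and T1maps: "\<And>t \<omega> x. 0 \<le> t \<Longrightarrow> x \<in> Xsp P \<omega> \<Longrightarrow> T1 t \<omega> x \<in> Xsp P (\<phi> t \<omega>)"
    and T10: "\<And>\<omega> x. x \<in> Xsp P \<omega> \<Longrightarrow> T1 0 \<omega> x = x"
    and T1coc: "\<And>t s \<omega> x. 0 \<le> t \<Longrightarrow> 0 \<le> s \<Longrightarrow> x \<in> Xsp P \<omega> \<Longrightarrow>
                  T1 (t + s) \<omega> x = T1 t (\<phi> s \<omega>) (T1 s \<omega> x)"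
    and T1cont: "continuous_on ({0..} \<times> UNIV \<times> UNIV) (\<lambda>(t, \<omega>, z). T1 t \<omega> (P \<omega> z))"
    \<comment> \<open>(b) the operators S1: S1 t \<omega> is S_1(-t, t\<omega>) : Y_{t\<omega>} \<rightarrow> Y_\<omega>\<close>
    and S1maps: "\<And>t \<omega> y. 0 \<le> t \<Longrightarrow> y \<in> Ysp P (\<phi> t \<omega>) \<Longrightarrow> S1 t \<omega> y \<in> Ysp P \<omega>"
    and S10: "\<And>\<omega> y. y \<in> Ysp P \<omega> \<Longrightarrow> S1 0 \<omega> y = y"
    and S1coc: "\<And>t s \<omega> y. 0 \<le> t \<Longrightarrow> 0 \<le> s \<Longrightarrow> y \<in> Ysp P (\<phi> (t + s) \<omega>) \<Longrightarrow>
                  S1 (t + s) \<omega> y = S1 s \<omega> (S1 t (\<phi> s \<omega>) y)"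
    and S1cont: "continuous_on ({0..} \<times> UNIV \<times> UNIV)
                   (\<lambda>(t, \<omega>, z). S1 t \<omega> (projc P (\<phi> t \<omega>) z))"
    \<comment> \<open>(c)\<close>
    and Pbnd: "\<And>\<omega>. norm (P \<omega>) \<le> C1"
    and Pcbnd: "\<And>\<omega>. norm (id_blinfun - P \<omega>) \<le> C1"
    \<comment> \<open>(d)\<close>
    and T1bnd: "\<And>t r \<omega> x. 0 \<le> t \<Longrightarrow> 0 \<le> r \<Longrightarrow> x \<in> Xsp P (\<phi> r \<omega>) \<Longrightarrow>
                  norm (T1 t (\<phi> r \<omega>) x) \<le> exp (\<mu>s \<omega> * t) * norm x"
    and S1bnd: "\<And>t r \<omega> y. 0 \<le> t \<Longrightarrow> 0 \<le> r \<Longrightarrow> y \<in> Ysp P (\<phi> t (\<phi> r \<omega>)) \<Longrightarrow>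
                  norm (S1 t (\<phi> r \<omega>) y) \<le> exp (- \<mu>u \<omega> * t) * norm y"
    \<comment> \<open>(UD+): the linear variation-of-constants relation\<close>
    and UDlin: "\<And>\<omega> t1 t2 x1 y2 t. 0 \<le> t1 \<Longrightarrow> t1 \<le> t2 \<Longrightarrow>
                  x1 \<in> Xsp P (\<phi> t1 \<omega>) \<Longrightarrow> y2 \<in> Ysp P (\<phi> t2 \<omega>) \<Longrightarrow> t \<in> {t1..t2} \<Longrightarrow>
                  (let z = (\<lambda>r. T1 (r - t1) (\<phi> t1 \<omega>) x1 + S1 (t2 - r) (\<phi> r \<omega>) y2) in
                    ((\<lambda>r. T (t - r) (fst (L (\<phi> r \<omega>) (z r))))
                       has_integral (fst (z t) - T (t - t1) (fst (z t1)))) {t1..t} \<and>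
                    ((\<lambda>r. S (t - r) (snd (L (\<phi> r \<omega>) (z r))))
                       has_integral (S (t - t2) (snd (z t2)) - snd (z t))) {t..t2})"
    \<comment> \<open>gap condition\<close>
    and gap: "\<And>\<omega>. \<mu>u \<omega> - \<mu>s \<omega> - 2 * eps' \<omega> > 0"
  shows
    "(\<forall>\<omega> a b t s. eps' \<omega> / \<sigma> \<omega> \<le> a \<and> a < 1 \<and> eps' \<omega> / \<sigma> \<omega> \<le> b \<and> b < 1 \<and>
         0 \<le> t \<and> 0 \<le> s \<longrightarrow>
         AB_cond (H t (\<phi> s \<omega>)) a a (lamu \<omega> powr t) b b (lams \<omega> powr t))
   \<and> (\<forall>\<omega> a b ka kb \<epsilon>1 t s.
         eps' \<omega> / \<sigma> \<omega> < a \<and> a < 1 \<and> eps' \<omega> / \<sigma> \<omega> < b \<and> b < 1 \<and>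
         0 < \<epsilon>1 \<and> \<epsilon>1 \<le> t \<and> 0 \<le> s \<and>
         ((\<sigma> \<omega> - eps' \<omega> / a) * exp (- \<sigma> \<omega> * \<epsilon>1) + eps' \<omega> / a) / \<sigma> \<omega> \<le> ka \<and> ka < 1 \<and>
         ((\<sigma> \<omega> - eps' \<omega> / b) * exp (- \<sigma> \<omega> * \<epsilon>1) + eps' \<omega> / b) / \<sigma> \<omega> \<le> kb \<and> kb < 1 \<longrightarrow>
         AB_cond (H t (\<phi> s \<omega>)) a (ka * a) (lamu \<omega> powr t) b (kb * b) (lams \<omega> powr t))
   \<and> ((\<exists>c>1. \<exists>\<delta>>0. \<forall>\<omega>. \<mu>u \<omega> - \<mu>s \<omega> - (1 + c) * eps' \<omega> \<ge> \<delta>) \<longrightarrow>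
         (\<exists>q<1. \<forall>\<omega>. lams \<omega> * lamu \<omega> \<le> q)
       \<and> (SUP \<omega>. eps' \<omega> / \<sigma> \<omega>) < 1
       \<and> (\<forall>t s \<omega>. 0 \<le> t \<and> 0 \<le> s \<longrightarrow>
            AB_cond (H t (\<phi> s \<omega>)) (SUP w. eps' w / \<sigma> w) (SUP w. eps' w / \<sigma> w) (lamu \<omega> powr t)
                                     (SUP w. eps' w / \<sigma> w) (SUP w. eps' w / \<sigma> w) (lams \<omega> powr t))
       \<and> (\<forall>a b \<epsilon>1. (SUP w. eps' w / \<sigma> w) < a \<and> a < 1 \<and> (SUP w. eps' w / \<sigma> w) < b \<and> b < 1 \<and>
              0 < \<epsilon>1 \<longrightarrow>
            (\<exists>ka kb. ka < 1 \<and> kb < 1 \<and>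
               (\<forall>\<omega>. ((\<sigma> \<omega> - eps' \<omega> / a) * exp (- \<sigma> \<omega> * \<epsilon>1) + eps' \<omega> / a) / \<sigma> \<omega> \<le> ka \<and>
                     ((\<sigma> \<omega> - eps' \<omega> / b) * exp (- \<sigma> \<omega> * \<epsilon>1) + eps' \<omega> / b) / \<sigma> \<omega> \<le> kb) \<and>
               (\<forall>t s \<omega>. \<epsilon>1 \<le> t \<and> 0 \<le> s \<longrightarrow>
                  AB_cond (H t (\<phi> s \<omega>)) a (ka * a) (lamu \<omega> powr t) b (kb * b) (lams \<omega> powr t)))))"
proof -
  define E where "E = (\<lambda>\<omega>. SUP t\<in>{0..}. lipc (f (\<phi> t \<omega>)))"
  have eps'E: "eps' \<omega> = 2 * (C1 * E \<omega>)" for \<omega> unfolding eps'_def E_def by simp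
  have \<sigma>E: "\<sigma> \<omega> = \<mu>u \<omega> - \<mu>s \<omega> - 2 * (C1 * E \<omega>)" for \<omega> unfolding \<sigma>_def E_def by simp
  have lamuE: "lamu \<omega> powr t = exp ((- \<mu>u \<omega> + 2 * (C1 * E \<omega>)) * t)" for \<omega> t
    unfolding lamu_def E_def by (simp add: exp_powr_real mult.assoc)
  have lamsE: "lams \<omega> powr t = exp ((\<mu>s \<omega> + 2 * (C1 * E \<omega>)) * t)" for \<omega> t
    unfolding lams_def E_def by (simp add: exp_powr_real mult.assoc)
  have lamprod: "lams \<omega> * lamu \<omega> = exp (\<mu>s \<omega> - \<mu>u \<omega> + 2 * eps' \<omega>)" for \<omega>
    unfolding lams_def lamu_def eps'_def by (simp flip: exp_add)
  have C0: "0 \<le> C1" using Pbnd[of undefined] norm_ge_zero order_trans by blast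
  have Eprops: "0 \<le> E \<omega> \<and> (\<forall>r p q. 0 \<le> r \<longrightarrow> norm (f (\<phi> r \<omega>) p - f (\<phi> r \<omega>) q) \<le> E \<omega> * norm (p - q))" for \<omega>
  proof -
    obtain K where K: "\<forall>t\<ge>0. lipschitz_on K UNIV (f (\<phi> t \<omega>))" using D2lip by blast
    have bdd: "bdd_above ((\<lambda>t. lipc (f (\<phi> t \<omega>))) ` {0..})"
      by (rule bdd_aboveI2[of _ _ K]) (use K lipc_props(2) in auto)
    have le: "lipc (f (\<phi> r \<omega>)) \<le> E \<omega>" if "0 \<le> r" for r
      unfolding E_def using bdd that by (intro cSUP_upper) auto
    have "0 \<le> lipc (f (\<phi> 0 \<omega>))" using K lipc_props(1) by auto
    then have "0 \<le> E \<omega>" using le[of 0] by simp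
    moreover have "norm (f (\<phi> r \<omega>) p - f (\<phi> r \<omega>) q) \<le> E \<omega> * norm (p - q)" if "0 \<le> r" for r p q
    proof -
      have "dist (f (\<phi> r \<omega>) p) (f (\<phi> r \<omega>) q) \<le> lipc (f (\<phi> r \<omega>)) * dist p q"
        using K that lipc_props(3) by blast
      also have "\<dots> \<le> E \<omega> * dist p q" using le[OF that] by (simp add: mult_right_mono)
      finally show ?thesis by (simp add: dist_norm)
    qed
    ultimately show ?thesis by blast
  qed
  have E0: "0 \<le> E \<omega>" for \<omega> using Eprops by blast
  have lipE: "norm (f (\<phi> r \<omega>) p - f (\<phi> r \<omega>) q) \<le> E \<omega> * norm (p - q)" if "0 \<le> r" for \<omega> r p q
    using Eprops that by blast
  have dl: "0 \<le> C1 * E \<omega>" for \<omega> using C0 E0 by simp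
  have eps0: "0 \<le> eps' \<omega>" for \<omega> using dl eps'E by simp
  have sig: "0 < \<mu>u \<omega> - \<mu>s \<omega> - 2 * (C1 * E \<omega>)" for \<omega>
    using gap[of \<omega>] eps'E[of \<omega>] dl[of \<omega>] by linarith
  have \<sigma>pos: "0 < \<sigma> \<omega>" for \<omega> using sig \<sigma>E by simp
  define \<Gamma> where "\<Gamma> = (\<lambda>\<omega> t \<alpha>. exp (- \<sigma> \<omega> * t) * \<alpha> + eps' \<omega> / \<sigma> \<omega> * (1 - exp (- \<sigma> \<omega> * t)))"
  have key: "(eps' \<omega> / \<sigma> \<omega> \<le> \<alpha> \<longrightarrow> \<alpha> \<le> 1 \<longrightarrow> norm (x1 - x1') \<le> \<alpha> * norm (y1 - y1') \<longrightarrow>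
       norm (x2 - x2') \<le> \<Gamma> \<omega> t \<alpha> * norm (y2 - y2') \<and> norm (y1 - y1') \<le> lamu \<omega> powr t * norm (y2 - y2'))
     \<and> (eps' \<omega> / \<sigma> \<omega> \<le> \<beta> \<longrightarrow> \<beta> \<le> 1 \<longrightarrow> norm (y2 - y2') \<le> \<beta> * norm (x2 - x2') \<longrightarrow>
       norm (y1 - y1') \<le> \<Gamma> \<omega> t \<beta> * norm (x1 - x1') \<and> norm (x2 - x2') \<le> lams \<omega> powr t * norm (x1 - x1'))"
    if st: "0 \<le> s" "0 \<le> t" and m1: "((x1, y1), (x2, y2)) \<in> H t (\<phi> s \<omega>)"
      and m2: "((x1', y1'), (x2', y2')) \<in> H t (\<phi> s \<omega>)"
    for \<omega> s t x1 y1 x2 y2 x1' y1' x2' y2' \<alpha> \<beta>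
  proof -
    from m1 obtain z where z: "is_sol \<phi> P T1 S1 f t (\<phi> s \<omega>) z"
      and zx: "P (\<phi> s \<omega>) (z 0) = x1" "projc P (\<phi> s \<omega>) (z 0) = y1"
        "P (\<phi> t (\<phi> s \<omega>)) (z t) = x2" "projc P (\<phi> t (\<phi> s \<omega>)) (z t) = y2"
      unfolding H_def corr_def by blast
    from m2 obtain z' where z': "is_sol \<phi> P T1 S1 f t (\<phi> s \<omega>) z'"
      and zx': "P (\<phi> s \<omega>) (z' 0) = x1'" "projc P (\<phi> s \<omega>) (z' 0) = y1'"
        "P (\<phi> t (\<phi> s \<omega>)) (z' t) = x2'" "projc P (\<phi> t (\<phi> s \<omega>)) (z' t) = y2'"
      unfolding H_def corr_def by blast
    define u where "u = (\<lambda>r. norm (P (\<phi> r (\<phi> s \<omega>)) (z r - z' r)))"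
    define v where "v = (\<lambda>r. norm (projc P (\<phi> r (\<phi> s \<omega>)) (z r - z' r)))"
    have phisgH: "\<forall>t s \<omega>. 0 \<le> t \<longrightarrow> 0 \<le> s \<longrightarrow> \<phi> (t + s) \<omega> = \<phi> t (\<phi> s \<omega>)"
      using phisg by blast
    have T1b: "\<forall>t r x. 0 \<le> t \<longrightarrow> 0 \<le> r \<longrightarrow> x \<in> Xsp P (\<phi> r \<omega>) \<longrightarrow>
                  norm (T1 t (\<phi> r \<omega>) x) \<le> exp (\<mu>s \<omega> * t) * norm x" using T1bnd by blast
    have S1b: "\<forall>t r y. 0 \<le> t \<longrightarrow> 0 \<le> r \<longrightarrow> y \<in> Ysp P (\<phi> t (\<phi> r \<omega>)) \<longrightarrow>
                  norm (S1 t (\<phi> r \<omega>) y) \<le> exp (- \<mu>u \<omega> * t) * norm y" using S1bnd by blast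
    have lipw: "\<forall>r p q. 0 \<le> r \<longrightarrow> norm (f (\<phi> r \<omega>) p - f (\<phi> r \<omega>) q) \<le> E \<omega> * norm (p - q)"
      using lipE by blast
    note e = est[where \<omega> = \<omega> and s = s and t = t and a = "\<mu>s \<omega>" and b = "\<mu>u \<omega>" and E = "E \<omega>",
        OF phisgH phi0 phicont Pcont Pbnd Pcbnd T1b S1b lipw E0[of \<omega>] st z z' u_def v_def]
    have u0: "u 0 = norm (x1 - x1')" unfolding u_def using zx(1) zx'(1) by (simp add: phi0 blinfun.diff_right)
    have v0: "v 0 = norm (y1 - y1')" unfolding v_def using zx(2) zx'(2) by (simp add: phi0 flip: projc_lin)
    have ut: "u t = norm (x2 - x2')" unfolding u_def using zx(3) zx'(3) by (simp add: blinfun.diff_right)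
    have vt: "v t = norm (y2 - y2')" unfolding v_def using zx(4) zx'(4) by (simp flip: projc_lin)
    have un: "\<And>r. r \<in> {0..t} \<Longrightarrow> 0 \<le> u r" by (simp add: u_def)
    have vn: "\<And>r. r \<in> {0..t} \<Longrightarrow> 0 \<le> v r" by (simp add: v_def)
    have GE: "\<Gamma> \<omega> t \<gamma> = exp (- (\<mu>u \<omega> - \<mu>s \<omega> - 2 * (C1 * E \<omega>)) * t) * \<gamma> +
        2 * (C1 * E \<omega>) / (\<mu>u \<omega> - \<mu>s \<omega> - 2 * (C1 * E \<omega>)) * (1 - exp (- (\<mu>u \<omega> - \<mu>s \<omega> - 2 * (C1 * E \<omega>)) * t))" for \<gamma>
      unfolding \<Gamma>_def \<sigma>E eps'E ..
    have kE: "eps' \<omega> / \<sigma> \<omega> = 2 * (C1 * E \<omega>) / (\<mu>u \<omega> - \<mu>s \<omega> - 2 * (C1 * E \<omega>))"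
      unfolding \<sigma>E eps'E ..
    have lu: "lamu \<omega> powr t = exp ((- \<mu>u \<omega> + 2 * (C1 * E \<omega>)) * t)" by (rule lamuE)
    have ls: "lams \<omega> powr t = exp ((\<mu>s \<omega> + 2 * (C1 * E \<omega>)) * t)" by (rule lamsE)
    show ?thesis
    proof (intro conjI impI)
      assume a1: "eps' \<omega> / \<sigma> \<omega> \<le> \<alpha>" and a2: "\<alpha> \<le> 1" and a3: "norm (x1 - x1') \<le> \<alpha> * norm (y1 - y1')"
      have h: "u 0 \<le> \<alpha> * v 0" using a3 u0 v0 by simp
      note r = scalarA[where u=u and v=v and a="\<mu>s \<omega>" and b="\<mu>u \<omega>" and \<delta>="C1 * E \<omega>" and t=t and \<alpha>=\<alpha>, OF st(2) dl e(1) e(2) un vn e(3) e(4) sig a1[unfolded kE] a2 h]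
      show "norm (x2 - x2') \<le> \<Gamma> \<omega> t \<alpha> * norm (y2 - y2')" using conjunct1[OF r] by (simp only: GE ut vt)
      show "norm (y1 - y1') \<le> lamu \<omega> powr t * norm (y2 - y2')" using conjunct2[OF r] by (simp only: lu v0 vt)
    next
      assume a1: "eps' \<omega> / \<sigma> \<omega> \<le> \<beta>" and a2: "\<beta> \<le> 1" and a3: "norm (y2 - y2') \<le> \<beta> * norm (x2 - x2')"
      have h: "v t \<le> \<beta> * u t" using a3 ut vt by simp
      note r = scalarB[where u=u and v=v and a="\<mu>s \<omega>" and b="\<mu>u \<omega>" and \<delta>="C1 * E \<omega>" and t=t and \<beta>=\<beta>, OF st(2) dl e(1) e(2) un vn e(3) e(4) sig a1[unfolded kE] a2 h]
      show "norm (y1 - y1') \<le> \<Gamma> \<omega> t \<beta> * norm (x1 - x1')" using conjunct1[OF r] by (simp only: GE u0 v0)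
      show "norm (x2 - x2') \<le> lams \<omega> powr t * norm (x1 - x1')" using conjunct2[OF r] by (simp only: ls u0 ut)
    qed
  qed
  have ABgen: "AB_cond (H t (\<phi> s \<omega>)) \<alpha> \<alpha>' (lamu \<omega> powr t) \<beta> \<beta>' (lams \<omega> powr t)"
    if st: "0 \<le> s" "0 \<le> t" and h: "eps' \<omega> / \<sigma> \<omega> \<le> \<alpha>" "\<alpha> \<le> 1" "eps' \<omega> / \<sigma> \<omega> \<le> \<beta>" "\<beta> \<le> 1"
      "\<Gamma> \<omega> t \<alpha> \<le> \<alpha>'" "\<Gamma> \<omega> t \<beta> \<le> \<beta>'"
    for \<omega> s t \<alpha> \<alpha>' \<beta> \<beta>'
    unfolding AB_cond_def
  proof (intro allI impI conjI)
    fix x1 y1 x2 y2 x1' y1' x2' y2'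
    assume m1: "((x1, y1), x2, y2) \<in> H t (\<phi> s \<omega>)" and m2: "((x1', y1'), x2', y2') \<in> H t (\<phi> s \<omega>)"
    note k = key[OF st m1 m2, of \<alpha> \<beta>]
    {
      assume c: "norm (x1 - x1') \<le> \<alpha> * norm (y1 - y1')"
      have "norm (x2 - x2') \<le> \<Gamma> \<omega> t \<alpha> * norm (y2 - y2')" using k h c by blast
      also have "\<dots> \<le> \<alpha>' * norm (y2 - y2')" using h(5) by (simp add: mult_right_mono)
      finally show "norm (x2 - x2') \<le> \<alpha>' * norm (y2 - y2')" .
      show "norm (y1 - y1') \<le> lamu \<omega> powr t * norm (y2 - y2')" using k h c by blast
    next
      assume c: "norm (y2 - y2') \<le> \<beta> * norm (x2 - x2')"
      have "norm (y1 - y1') \<le> \<Gamma> \<omega> t \<beta> * norm (x1 - x1')" using k h c by blast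
      also have "\<dots> \<le> \<beta>' * norm (x1 - x1')" using h(6) by (simp add: mult_right_mono)
      finally show "norm (y1 - y1') \<le> \<beta>' * norm (x1 - x1')" .
      show "norm (x2 - x2') \<le> lams \<omega> powr t * norm (x1 - x1')" using k h c by blast
    }
  qed
  have \<Gamma>le: "\<Gamma> \<omega> t \<alpha> \<le> \<alpha>" if "eps' \<omega> / \<sigma> \<omega> \<le> \<alpha>" "0 \<le> t" for \<omega> t \<alpha>
  proof -
    have "exp (- \<sigma> \<omega> * t) \<le> 1" using \<sigma>pos[of \<omega>] that(2) by simp
    then have "0 \<le> (1 - exp (- \<sigma> \<omega> * t)) * (\<alpha> - eps' \<omega> / \<sigma> \<omega>)" using that(1) by simp
    moreover have "\<alpha> - \<Gamma> \<omega> t \<alpha> = (1 - exp (- \<sigma> \<omega> * t)) * (\<alpha> - eps' \<omega> / \<sigma> \<omega>)"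
      by (simp add: \<Gamma>_def algebra_simps)
    ultimately show ?thesis by linarith
  qed
  have \<Gamma>le2: "\<Gamma> \<omega> t \<alpha> \<le> ka * \<alpha>"
    if h: "eps' \<omega> / \<sigma> \<omega> < \<alpha>" "0 < \<epsilon>1" "\<epsilon>1 \<le> t"
      "((\<sigma> \<omega> - eps' \<omega> / \<alpha>) * exp (- \<sigma> \<omega> * \<epsilon>1) + eps' \<omega> / \<alpha>) / \<sigma> \<omega> \<le> ka"
    for \<omega> t \<alpha> ka \<epsilon>1
  proof -
    define k where "k = eps' \<omega> / \<sigma> \<omega>"
    define X where "X = exp (- \<sigma> \<omega> * \<epsilon>1)"
    have sp: "0 < \<sigma> \<omega>" by (rule \<sigma>pos)
    have k0: "0 \<le> k" using eps0[of \<omega>] sp by (simp add: k_def)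
    have ap: "0 < \<alpha>" using h(1) k0 k_def by linarith
    have "exp (- \<sigma> \<omega> * t) \<le> X" unfolding X_def using sp h(3) by simp
    then have "(\<alpha> - k) * exp (- \<sigma> \<omega> * t) \<le> (\<alpha> - k) * X" using h(1) k_def by (intro mult_left_mono) auto
    moreover have "\<Gamma> \<omega> t \<alpha> = (\<alpha> - k) * exp (- \<sigma> \<omega> * t) + k" by (simp add: \<Gamma>_def k_def algebra_simps)
    moreover have "((\<sigma> \<omega> - eps' \<omega> / \<alpha>) * X + eps' \<omega> / \<alpha>) / \<sigma> \<omega> * \<alpha> = (\<alpha> - k) * X + k"
      using sp ap by (simp add: k_def field_simps)
    moreover have "((\<sigma> \<omega> - eps' \<omega> / \<alpha>) * X + eps' \<omega> / \<alpha>) / \<sigma> \<omega> * \<alpha> \<le> ka * \<alpha>"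
      unfolding X_def by (rule mult_right_mono[OF h(4)]) (use ap in simp)
    ultimately show ?thesis by linarith
  qed
  have part1: "\<forall>\<omega> a b t s. eps' \<omega> / \<sigma> \<omega> \<le> a \<and> a < 1 \<and> eps' \<omega> / \<sigma> \<omega> \<le> b \<and> b < 1 \<and>
         0 \<le> t \<and> 0 \<le> s \<longrightarrow>
         AB_cond (H t (\<phi> s \<omega>)) a a (lamu \<omega> powr t) b b (lams \<omega> powr t)"
  proof (intro allI impI)
    fix \<omega> :: 'm and a b t s :: real
    assume h: "eps' \<omega> / \<sigma> \<omega> \<le> a \<and> a < 1 \<and> eps' \<omega> / \<sigma> \<omega> \<le> b \<and> b < 1 \<and> 0 \<le> t \<and> 0 \<le> s"
    show "AB_cond (H t (\<phi> s \<omega>)) a a (lamu \<omega> powr t) b b (lams \<omega> powr t)"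
      using h by (intro ABgen \<Gamma>le) auto
  qed
  have part2: "\<forall>\<omega> a b ka kb \<epsilon>1 t s.
         eps' \<omega> / \<sigma> \<omega> < a \<and> a < 1 \<and> eps' \<omega> / \<sigma> \<omega> < b \<and> b < 1 \<and>
         0 < \<epsilon>1 \<and> \<epsilon>1 \<le> t \<and> 0 \<le> s \<and>
         ((\<sigma> \<omega> - eps' \<omega> / a) * exp (- \<sigma> \<omega> * \<epsilon>1) + eps' \<omega> / a) / \<sigma> \<omega> \<le> ka \<and> ka < 1 \<and>
         ((\<sigma> \<omega> - eps' \<omega> / b) * exp (- \<sigma> \<omega> * \<epsilon>1) + eps' \<omega> / b) / \<sigma> \<omega> \<le> kb \<and> kb < 1 \<longrightarrow>
         AB_cond (H t (\<phi> s \<omega>)) a (ka * a) (lamu \<omega> powr t) b (kb * b) (lams \<omega> powr t)"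
  proof (intro allI impI)
    fix \<omega> :: 'm and a b ka kb \<epsilon>1 t s :: real
    assume h: "eps' \<omega> / \<sigma> \<omega> < a \<and> a < 1 \<and> eps' \<omega> / \<sigma> \<omega> < b \<and> b < 1 \<and>
         0 < \<epsilon>1 \<and> \<epsilon>1 \<le> t \<and> 0 \<le> s \<and>
         ((\<sigma> \<omega> - eps' \<omega> / a) * exp (- \<sigma> \<omega> * \<epsilon>1) + eps' \<omega> / a) / \<sigma> \<omega> \<le> ka \<and> ka < 1 \<and>
         ((\<sigma> \<omega> - eps' \<omega> / b) * exp (- \<sigma> \<omega> * \<epsilon>1) + eps' \<omega> / b) / \<sigma> \<omega> \<le> kb \<and> kb < 1"
    show "AB_cond (H t (\<phi> s \<omega>)) a (ka * a) (lamu \<omega> powr t) b (kb * b) (lams \<omega> powr t)"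
    proof (rule ABgen)
      show "\<Gamma> \<omega> t a \<le> ka * a" using h by (intro \<Gamma>le2[of \<omega> a \<epsilon>1]) auto
      show "\<Gamma> \<omega> t b \<le> kb * b" using h by (intro \<Gamma>le2[of \<omega> b \<epsilon>1]) auto
    qed (use h in auto)
  qed
  have part3: "(\<exists>c>1. \<exists>\<delta>>0. \<forall>\<omega>. \<mu>u \<omega> - \<mu>s \<omega> - (1 + c) * eps' \<omega> \<ge> \<delta>) \<longrightarrow>
         (\<exists>q<1. \<forall>\<omega>. lams \<omega> * lamu \<omega> \<le> q)
       \<and> (SUP \<omega>. eps' \<omega> / \<sigma> \<omega>) < 1
       \<and> (\<forall>t s \<omega>. 0 \<le> t \<and> 0 \<le> s \<longrightarrow>
            AB_cond (H t (\<phi> s \<omega>)) (SUP w. eps' w / \<sigma> w) (SUP w. eps' w / \<sigma> w) (lamu \<omega> powr t)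
                                     (SUP w. eps' w / \<sigma> w) (SUP w. eps' w / \<sigma> w) (lams \<omega> powr t))
       \<and> (\<forall>a b \<epsilon>1. (SUP w. eps' w / \<sigma> w) < a \<and> a < 1 \<and> (SUP w. eps' w / \<sigma> w) < b \<and> b < 1 \<and>
              0 < \<epsilon>1 \<longrightarrow>
            (\<exists>ka kb. ka < 1 \<and> kb < 1 \<and>
               (\<forall>\<omega>. ((\<sigma> \<omega> - eps' \<omega> / a) * exp (- \<sigma> \<omega> * \<epsilon>1) + eps' \<omega> / a) / \<sigma> \<omega> \<le> ka \<and>
                     ((\<sigma> \<omega> - eps' \<omega> / b) * exp (- \<sigma> \<omega> * \<epsilon>1) + eps' \<omega> / b) / \<sigma> \<omega> \<le> kb) \<and>
               (\<forall>t s \<omega>. \<epsilon>1 \<le> t \<and> 0 \<le> s \<longrightarrow>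
                  AB_cond (H t (\<phi> s \<omega>)) a (ka * a) (lamu \<omega> powr t) b (kb * b) (lams \<omega> powr t))))"
  proof
    assume "\<exists>c>1. \<exists>\<delta>>0. \<forall>\<omega>. \<mu>u \<omega> - \<mu>s \<omega> - (1 + c) * eps' \<omega> \<ge> \<delta>"
    then obtain c d where c: "c > 1" and d: "d > 0" and cd: "\<And>\<omega>. \<mu>u \<omega> - \<mu>s \<omega> - (1 + c) * eps' \<omega> \<ge> d"
      by blast
    have \<sigma>lo: "\<sigma> \<omega> \<ge> c * eps' \<omega> + d" for \<omega>
      using cd[of \<omega>] \<sigma>E[of \<omega>] eps'E[of \<omega>] by (simp add: algebra_simps)
    have \<sigma>d: "\<sigma> \<omega> \<ge> d" for \<omega> using \<sigma>lo[of \<omega>] eps0[of \<omega>] c by (smt (verit) mult_nonneg_nonneg)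
    have rb: "eps' \<omega> / \<sigma> \<omega> \<le> 1 / c" for \<omega>
    proof -
      have "c * eps' \<omega> \<le> \<sigma> \<omega>" using \<sigma>lo[of \<omega>] d by linarith
      then have "eps' \<omega> \<le> \<sigma> \<omega> / c" using c by (simp add: field_simps)
      then show ?thesis using \<sigma>pos[of \<omega>] c by (simp add: field_simps)
    qed
    define m where "m = (SUP w. eps' w / \<sigma> w)"
    have bdd: "bdd_above (range (\<lambda>w. eps' w / \<sigma> w))" by (rule bdd_aboveI2[of _ _ "1 / c"]) (use rb in auto)
    have mle: "eps' \<omega> / \<sigma> \<omega> \<le> m" for \<omega> unfolding m_def by (rule cSUP_upper[OF UNIV_I bdd])
    have mub: "m \<le> 1 / c" unfolding m_def by (rule cSUP_least) (use rb in auto)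
    have m1: "m < 1" proof -
      have "1 / c < 1" using c by simp
      then show ?thesis using mub by linarith
    qed
    have m0: "0 \<le> m" using mle[of undefined] eps0[of undefined] \<sigma>pos[of undefined]
      by (meson divide_nonneg_pos order_trans)
    show "(\<exists>q<1. \<forall>\<omega>. lams \<omega> * lamu \<omega> \<le> q)
       \<and> (SUP \<omega>. eps' \<omega> / \<sigma> \<omega>) < 1
       \<and> (\<forall>t s \<omega>. 0 \<le> t \<and> 0 \<le> s \<longrightarrow>
            AB_cond (H t (\<phi> s \<omega>)) (SUP w. eps' w / \<sigma> w) (SUP w. eps' w / \<sigma> w) (lamu \<omega> powr t)
                                     (SUP w. eps' w / \<sigma> w) (SUP w. eps' w / \<sigma> w) (lams \<omega> powr t))
       \<and> (\<forall>a b \<epsilon>1. (SUP w. eps' w / \<sigma> w) < a \<and> a < 1 \<and> (SUP w. eps' w / \<sigma> w) < b \<and> b < 1 \<and>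
              0 < \<epsilon>1 \<longrightarrow>
            (\<exists>ka kb. ka < 1 \<and> kb < 1 \<and>
               (\<forall>\<omega>. ((\<sigma> \<omega> - eps' \<omega> / a) * exp (- \<sigma> \<omega> * \<epsilon>1) + eps' \<omega> / a) / \<sigma> \<omega> \<le> ka \<and>
                     ((\<sigma> \<omega> - eps' \<omega> / b) * exp (- \<sigma> \<omega> * \<epsilon>1) + eps' \<omega> / b) / \<sigma> \<omega> \<le> kb) \<and>
               (\<forall>t s \<omega>. \<epsilon>1 \<le> t \<and> 0 \<le> s \<longrightarrow>
                  AB_cond (H t (\<phi> s \<omega>)) a (ka * a) (lamu \<omega> powr t) b (kb * b) (lams \<omega> powr t))))"
      unfolding m_def[symmetric]
    proof (intro conjI allI impI)
      show "\<exists>q<1. \<forall>\<omega>. lams \<omega> * lamu \<omega> \<le> q"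
      proof (intro exI conjI allI)
        show "exp (- d) < 1" using d by simp
        fix \<omega> :: 'm
        have "\<mu>s \<omega> - \<mu>u \<omega> + 2 * eps' \<omega> \<le> - d"
          using cd[of \<omega>] eps0[of \<omega>] c mult_right_mono[of 1 c "eps' \<omega>"] by (simp add: algebra_simps)
        then show "lams \<omega> * lamu \<omega> \<le> exp (- d)" unfolding lamprod by simp
      qed
      show "m < 1" by (rule m1)
      fix t s :: real and \<omega> :: 'm assume ts: "0 \<le> t \<and> 0 \<le> s"
      show "AB_cond (H t (\<phi> s \<omega>)) m m (lamu \<omega> powr t) m m (lams \<omega> powr t)"
        using ts mle m1 by (intro ABgen \<Gamma>le) auto
    next
      fix a b \<epsilon>1 :: real assume h: "m < a \<and> a < 1 \<and> m < b \<and> b < 1 \<and> 0 < \<epsilon>1"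
      define P0 where "P0 = exp (- d * \<epsilon>1)"
      have P01: "0 < P0" "P0 < 1" using d h by (auto simp: P0_def)
      have exb: "((\<sigma> \<omega> - eps' \<omega> / a) * exp (- \<sigma> \<omega> * \<epsilon>1) + eps' \<omega> / a) / \<sigma> \<omega> \<le> 1 - (1 - P0) * (1 - m / a)"
        if a: "m < a" for \<omega> a
      proof -
        define X where "X = exp (- \<sigma> \<omega> * \<epsilon>1)"
        define q where "q = eps' \<omega> / (\<sigma> \<omega> * a)"
        have sp: "0 < \<sigma> \<omega>" by (rule \<sigma>pos)
        have ap: "0 < a" using a m0 by linarith
        have XP: "X \<le> P0" unfolding X_def P0_def using \<sigma>d[of \<omega>] h by (simp add: mult_right_mono)
        have q0: "0 \<le> q" using eps0[of \<omega>] sp ap by (simp add: q_def)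
        have qQ: "q \<le> m / a" using mle[of \<omega>] ap by (simp add: q_def divide_right_mono flip: divide_divide_eq_left)
        have "1 - m / a > 0" using a ap by (simp add: field_simps)
        have "(1 - P0) * (1 - m / a) \<le> (1 - X) * (1 - q)"
          using XP qQ P01 \<open>1 - m / a > 0\<close> by (intro mult_mono) auto
        moreover have "((\<sigma> \<omega> - eps' \<omega> / a) * X + eps' \<omega> / a) / \<sigma> \<omega> = 1 - (1 - X) * (1 - q)"
          using sp ap by (simp add: q_def field_simps)
        ultimately show ?thesis unfolding X_def by linarith
      qed
      have k1: "1 - (1 - P0) * (1 - m / c') < 1" if "m < c'" for c'
      proof -
        have "0 < c'" using that m0 by linarith
        then have "0 < 1 - m / c'" using that by (simp add: field_simps)
        then show ?thesis using P01 by simp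
      qed
      show "\<exists>ka kb. ka < 1 \<and> kb < 1 \<and>
               (\<forall>\<omega>. ((\<sigma> \<omega> - eps' \<omega> / a) * exp (- \<sigma> \<omega> * \<epsilon>1) + eps' \<omega> / a) / \<sigma> \<omega> \<le> ka \<and>
                     ((\<sigma> \<omega> - eps' \<omega> / b) * exp (- \<sigma> \<omega> * \<epsilon>1) + eps' \<omega> / b) / \<sigma> \<omega> \<le> kb) \<and>
               (\<forall>t s \<omega>. \<epsilon>1 \<le> t \<and> 0 \<le> s \<longrightarrow>
                  AB_cond (H t (\<phi> s \<omega>)) a (ka * a) (lamu \<omega> powr t) b (kb * b) (lams \<omega> powr t))"
      proof (intro exI conjI allI impI)
        show "1 - (1 - P0) * (1 - m / a) < 1" using h k1 by blast
        show "1 - (1 - P0) * (1 - m / b) < 1" using h k1 by blast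
        fix \<omega> :: 'm
        show "((\<sigma> \<omega> - eps' \<omega> / a) * exp (- \<sigma> \<omega> * \<epsilon>1) + eps' \<omega> / a) / \<sigma> \<omega> \<le> 1 - (1 - P0) * (1 - m / a)"
          using h exb by blast
        show "((\<sigma> \<omega> - eps' \<omega> / b) * exp (- \<sigma> \<omega> * \<epsilon>1) + eps' \<omega> / b) / \<sigma> \<omega> \<le> 1 - (1 - P0) * (1 - m / b)"
          using h exb by blast
      next
        fix t s :: real and \<omega> :: 'm assume ts: "\<epsilon>1 \<le> t \<and> 0 \<le> s"
        show "AB_cond (H t (\<phi> s \<omega>)) a ((1 - (1 - P0) * (1 - m / a)) * a) (lamu \<omega> powr t) b ((1 - (1 - P0) * (1 - m / b)) * b) (lams \<omega> powr t)"
        proof (rule ABgen)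
          show "\<Gamma> \<omega> t a \<le> (1 - (1 - P0) * (1 - m / a)) * a"
            using h ts mle[of \<omega>] exb[of a \<omega>] by (intro \<Gamma>le2[of \<omega> a \<epsilon>1]) auto
          show "\<Gamma> \<omega> t b \<le> (1 - (1 - P0) * (1 - m / b)) * b"
            using h ts mle[of \<omega>] exb[of b \<omega>] by (intro \<Gamma>le2[of \<omega> b \<epsilon>1]) auto
        qed (use h ts mle[of \<omega>] in auto)
      qed
    qed
  qed
  show ?thesis by (rule conjI[OF part1 conjI[OF part2 part3]])
qed

end
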